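(* Let $\psi:\mathcal C_2\to\mathcal P$ be defined by $\psi(C(p,q))=(\sqrt{q^2-p^2},p,q)$ if $2\mid p$ and $\psi(C(p,q))=(p,\sqrt{q^2-p^2},q)$ if $2\nmid p$. Then $\psi$ is a bijection; the map $\varphi:\mathcal P\to H'$, $\varphi(x,y,z)=$ the element $M\in H'$ with $M(1,0,1)^t=(x,y,z)^t$, is a well-defined bijection; and the binary operation on $\mathcal C_2$ $$C(p_1,q_1)*C(p_2,q_2)=\psi^{-1}\big(\varphi\psi(C(p_1,q_1))\,\varphi\psi(C(p_2,q_2))\,(1,0,1)^t\big)$$ makes $\mathcal C_2$ a free, non-commutative, infinitely generated monoid with identity $C(1,1)$ (the class of orthogonal well-rounded lattices), and $\varphi\psi:(\mathcal C_2,* )\to H'$ is a monoid isomorphism. Its Cayley digraph with respect to a free generating set is a regular rooted infinite tree in which every vertex has infinite degree.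
   Context: All lattices are full-rank lattices in $\mathbb R^2$. For a lattice $\Lambda$, $|\Lambda|=\min_{x\in\Lambda\setminus\{0\}}\|x\|$ (Euclidean norm) and $S(\Lambda)=\{x\in\Lambda:\|x\|=|\Lambda|\}$; $\Lambda$ is well-rounded (WR) if $S(\Lambda)$ spans $\mathbb R^2$. $\mathrm{WR}(\mathbb Z^2)$ is the set of full-rank WR sublattices of $\mathbb Z^2$. For a WR lattice $\Lambda$, $\theta(\Lambda)\in[\pi/3,\pi/2]$ is the angle between two linearly independent minimal vectors chosen so that the angle is at most $\pi/2$; equivalently $\sin\theta(\Lambda)=\det(\Lambda)/|\Lambda|^2$. For $q\in\mathbb Z_{>0}$ let $\mathcal S_q=\{p/q\in\mathbb Q\cap(\sqrt3/2,1):\gcd(p,q)=1,\ \sqrt{q^2-p^2}\in\mathbb Z\}$ and $\mathcal S=\bigcup_{q}\mathcal S_q\cup\{1\}$, where $1$ is written as $p/q$ with $p=q=1$; elements of $\mathcal S$ are written in lowest terms. For $p/q\in\mathcal S$, $C(p,q)=\{\Lambda\in\mathrm{WR}(\mathbb Z^2):\sin\theta(\Lambda)=p/q\}$, and $\mathcal C_2=\{C(p,q):p/q\in\mathcal S\}$ (these are exactly the similarity classes of lattices in $\mathrm{WR}(\mathbb Z^2)$). Let $\mathfrak P=\{(x,y,z)\in\mathbb Z_{>0}^3: 2\mid y,\ \gcd(x,y,z)=1,\ x^2+y^2=z^2\}$ and $\mathcal P=\{(x,y,z)\in\mathfrak P:\min\{x,y\}<z/2\}\cup\{(1,0,1)\}$.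 Let $A=\begin{pmatrix}1&-2&2\\2&-1&2\\2&-2&3\end{pmatrix}$, $B=\begin{pmatrix}1&2&2\\2&1&2\\2&2&3\end{pmatrix}$, $C=\begin{pmatrix}-1&2&2\\-2&1&2\\-2&2&3\end{pmatrix}$, and let $G$ be the monoid of $3\times3$ matrices generated by $I_3,A,B,C$ under multiplication, acting on triples viewed as column vectors. Let $H$ be the set of all matrices of the forms $A^2NB$, $A^kB$, $ABNB$, $C^2NB$, $C^kB$, $CBNB$, $(AC)^kA^2NB$, $(AC)^kABNB$, $(AC)^kAB$, $(CA)^kC^2NB$, $(CA)^kCBNB$, $(CA)^kCB$, with $N\in G$ and $k\in\mathbb Z_{>0}$, and $H'=H\cup\{I_3\}$ (a submonoid of $G$). *)

theory Defs
  imports "HOL-Analysis.Analysis" "HOL-Library.Equipollence"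
begin

section \<open>Planar lattices (points of R^2 modelled as real \<times> real, Euclidean norm)\<close>

definition full_rank_lattice :: "(real \<times> real) set \<Rightarrow> bool" where
  "full_rank_lattice L \<longleftrightarrow>
     (\<exists>u v. independent {u, v} \<and> u \<noteq> v \<and>
        L = {of_int m *\<^sub>R u + of_int n *\<^sub>R v | m n. True})"

definition lattice_min :: "(real \<times> real) set \<Rightarrow> real" where
  "lattice_min L = Inf {norm x | x. x \<in> L \<and> x \<noteq> 0}"

definition min_vectors :: "(real \<times> real) set \<Rightarrow> (real \<times> real) set" where
  "min_vectors L = {x \<in> L. norm x = lattice_min L}"

definition well_rounded :: "(real \<times> real) set \<Rightarrow> bool" where
  "well_rounded L \<longleftrightarrow> span (min_vectors L) = UNIV"

text \<open>Full-rank WR sublattices of Z^2.\<close>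
definition WR_Z2 :: "(real \<times> real) set set" where
  "WR_Z2 = {L. full_rank_lattice L \<and> well_rounded L \<and>
              L \<subseteq> {(of_int a, of_int b) | a b. True}}"

definition vec_angle :: "real \<times> real \<Rightarrow> real \<times> real \<Rightarrow> real" where
  "vec_angle u v = arccos (inner u v / (norm u * norm v))"

text \<open>theta(L): angle between two linearly independent minimal vectors, chosen to be at most pi/2.\<close>
definition lattice_theta :: "(real \<times> real) set \<Rightarrow> real" where
  "lattice_theta L = (THE t. \<exists>u\<in>min_vectors L. \<exists>v\<in>min_vectors L.
       independent {u, v} \<and> u \<noteq> v \<and> t = vec_angle u v \<and> t \<le> pi / 2)"

section \<open>The set S and the classes C(p,q)\<close>

text \<open>Elements p/q of S, in lowest terms, as pairs (p,q).\<close>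
definition S_pairs :: "(nat \<times> nat) set" where
  "S_pairs = {(p, q). 0 < p \<and> 0 < q \<and> coprime p q \<and>
                sqrt 3 / 2 < real p / real q \<and> real p / real q < 1 \<and>
                (\<exists>r::nat. q\<^sup>2 - p\<^sup>2 = r\<^sup>2)} \<union> {(1, 1)}"

definition Cls :: "nat \<Rightarrow> nat \<Rightarrow> (real \<times> real) set set" where
  "Cls p q = {L \<in> WR_Z2. sin (lattice_theta L) = real p / real q}"

definition C2 :: "(real \<times> real) set set set" where
  "C2 = {Cls p q | p q. (p, q) \<in> S_pairs}"

section \<open>Primitive Pythagorean triples\<close>

definition PPT :: "(int \<times> int \<times> int) set" where
  "PPT = {(x, y, z). 0 < x \<and> 0 < y \<and> 0 < z \<and> even y \<and> gcd x (gcd y z) = 1 \<and>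
                     x\<^sup>2 + y\<^sup>2 = z\<^sup>2}"

definition PP :: "(int \<times> int \<times> int) set" where
  "PP = {(x, y, z) \<in> PPT. 2 * min x y < z} \<union> {(1, 0, 1)}"

section \<open>Matrices\<close>

definition vec3 :: "int \<times> int \<times> int \<Rightarrow> int ^ 3" where
  "vec3 t = (case t of (x, y, z) \<Rightarrow> (\<chi> i. if i = 1 then x else if i = 2 then y else z))"

definition unvec3 :: "int ^ 3 \<Rightarrow> int \<times> int \<times> int" where
  "unvec3 w = (w $ 1, w $ 2, w $ 3)"

definition mat3 :: "int \<times> int \<times> int \<Rightarrow> int \<times> int \<times> int \<Rightarrow> int \<times> int \<times> int \<Rightarrow> int ^ 3 ^ 3" where
  "mat3 r1 r2 r3 = (\<chi> i. if i = 1 then vec3 r1 else if i = 2 then vec3 r2 else vec3 r3)"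

definition MA :: "int ^ 3 ^ 3" where "MA = mat3 (1, -2, 2) (2, -1, 2) (2, -2, 3)"
definition MB :: "int ^ 3 ^ 3" where "MB = mat3 (1, 2, 2) (2, 1, 2) (2, 2, 3)"
definition MC :: "int ^ 3 ^ 3" where "MC = mat3 (-1, 2, 2) (-2, 1, 2) (-2, 2, 3)"

primrec mpow :: "int ^ 3 ^ 3 \<Rightarrow> nat \<Rightarrow> int ^ 3 ^ 3" where
  "mpow M 0 = mat 1"
| "mpow M (Suc k) = M ** mpow M k"

inductive_set Gmon :: "(int ^ 3 ^ 3) set" where
  id: "mat 1 \<in> Gmon"
| mulA: "M \<in> Gmon \<Longrightarrow> M ** MA \<in> Gmon"
| mulB: "M \<in> Gmon \<Longrightarrow> M ** MB \<in> Gmon"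
| mulC: "M \<in> Gmon \<Longrightarrow> M ** MC \<in> Gmon"

definition Hset :: "(int ^ 3 ^ 3) set" where
  "Hset = {M. \<exists>N\<in>Gmon. \<exists>k::nat. 0 < k \<and>
     (M = MA ** MA ** N ** MB \<or> M = mpow MA k ** MB \<or> M = MA ** MB ** N ** MB \<or>
      M = MC ** MC ** N ** MB \<or> M = mpow MC k ** MB \<or> M = MC ** MB ** N ** MB \<or>
      M = mpow (MA ** MC) k ** MA ** MA ** N ** MB \<or>
      M = mpow (MA ** MC) k ** MA ** MB ** N ** MB \<or>
      M = mpow (MA ** MC) k ** MA ** MB \<or>
      M = mpow (MC ** MA) k ** MC ** MC ** N ** MB \<or>
      M = mpow (MC ** MA) k ** MC ** MB ** N ** MB \<or>
      M = mpow (MC ** MA) k ** MC ** MB)}"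

definition H' :: "(int ^ 3 ^ 3) set" where
  "H' = Hset \<union> {mat 1}"

section \<open>The maps psi, phi and the operation on C2\<close>

definition psi :: "(real \<times> real) set set \<Rightarrow> int \<times> int \<times> int" where
  "psi c = (THE t. \<exists>p q. (p, q) \<in> S_pairs \<and> c = Cls p q \<and>
      t = (if even p then (floor (sqrt (real q ^ 2 - real p ^ 2)), int p, int q)
           else (int p, floor (sqrt (real q ^ 2 - real p ^ 2)), int q)))"

definition phi :: "int \<times> int \<times> int \<Rightarrow> int ^ 3 ^ 3" where
  "phi t = (THE M. M \<in> H' \<and> M *v vec3 (1, 0, 1) = vec3 t)"

definition cstar :: "(real \<times> real) set set \<Rightarrow> (real \<times> real) set set \<Rightarrow> (real \<times> real) set set" where
  "cstar c1 c2 = the_inv_into C2 psi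
      (unvec3 ((phi (psi c1) ** phi (psi c2)) *v vec3 (1, 0, 1)))"

section \<open>Monoid-theoretic and graph-theoretic notions\<close>

text \<open>Product of a word (list) in a monoid with operation f and unit e.\<close>
definition word_prod :: "('a \<Rightarrow> 'a \<Rightarrow> 'a) \<Rightarrow> 'a \<Rightarrow> 'a list \<Rightarrow> 'a" where
  "word_prod f e xs = foldr f xs e"

definition is_monoid :: "'a set \<Rightarrow> ('a \<Rightarrow> 'a \<Rightarrow> 'a) \<Rightarrow> 'a \<Rightarrow> bool" where
  "is_monoid M f e \<longleftrightarrow> e \<in> M \<and> (\<forall>a\<in>M. \<forall>b\<in>M. f a b \<in> M) \<and>
     (\<forall>a\<in>M. \<forall>b\<in>M. \<forall>c\<in>M. f (f a b) c = f a (f b c)) \<and>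
     (\<forall>a\<in>M. f e a = a \<and> f a e = a)"

definition generates :: "'a set \<Rightarrow> ('a \<Rightarrow> 'a \<Rightarrow> 'a) \<Rightarrow> 'a \<Rightarrow> 'a set \<Rightarrow> bool" where
  "generates M f e X \<longleftrightarrow> X \<subseteq> M \<and>
     (\<forall>a\<in>M. \<exists>xs. set xs \<subseteq> X \<and> word_prod f e xs = a)"

text \<open>X is a free basis: every element is the product of a unique word over X.\<close>
definition free_basis :: "'a set \<Rightarrow> ('a \<Rightarrow> 'a \<Rightarrow> 'a) \<Rightarrow> 'a \<Rightarrow> 'a set \<Rightarrow> bool" where
  "free_basis M f e X \<longleftrightarrow> X \<subseteq> M \<and>
     (\<forall>a\<in>M. \<exists>!xs. set xs \<subseteq> X \<and> word_prod f e xs = a)"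

definition free_monoid :: "'a set \<Rightarrow> ('a \<Rightarrow> 'a \<Rightarrow> 'a) \<Rightarrow> 'a \<Rightarrow> bool" where
  "free_monoid M f e \<longleftrightarrow> is_monoid M f e \<and> (\<exists>X. free_basis M f e X)"

definition infinitely_generated :: "'a set \<Rightarrow> ('a \<Rightarrow> 'a \<Rightarrow> 'a) \<Rightarrow> 'a \<Rightarrow> bool" where
  "infinitely_generated M f e \<longleftrightarrow> \<not> (\<exists>F. finite F \<and> generates M f e F)"

definition monoid_iso ::
  "'a set \<Rightarrow> ('a \<Rightarrow> 'a \<Rightarrow> 'a) \<Rightarrow> 'a \<Rightarrow> 'b set \<Rightarrow> ('b \<Rightarrow> 'b \<Rightarrow> 'b) \<Rightarrow> 'b \<Rightarrow> ('a \<Rightarrow> 'b) \<Rightarrow> bool" where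
  "monoid_iso M f e N g u h \<longleftrightarrow> bij_betw h M N \<and> h e = u \<and>
     (\<forall>a\<in>M. \<forall>b\<in>M. h (f a b) = g (h a) (h b))"

text \<open>Cayley digraph of (M,f) w.r.t. X: edge a -> f a x for x in X.\<close>
definition cayley_edges :: "'a set \<Rightarrow> ('a \<Rightarrow> 'a \<Rightarrow> 'a) \<Rightarrow> 'a set \<Rightarrow> ('a \<times> 'a) set" where
  "cayley_edges M f X = {(a, f a x) | a x. a \<in> M \<and> x \<in> X}"

definition out_nbrs :: "('a \<times> 'a) set \<Rightarrow> 'a \<Rightarrow> 'a set" where
  "out_nbrs E v = {w. (v, w) \<in> E}"

text \<open>Rooted (directed) tree with root r: every vertex is reachable from r,
  r has no incoming edge and every other vertex has exactly one incoming edge.\<close>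
definition rooted_tree :: "'a set \<Rightarrow> ('a \<times> 'a) set \<Rightarrow> 'a \<Rightarrow> bool" where
  "rooted_tree V E r \<longleftrightarrow> r \<in> V \<and> E \<subseteq> V \<times> V \<and>
     (\<forall>v\<in>V. (r, v) \<in> E\<^sup>*) \<and> (\<forall>v. (v, r) \<notin> E) \<and>
     (\<forall>w\<in>V. w \<noteq> r \<longrightarrow> (\<exists>!v. (v, w) \<in> E))"

definition regular_digraph :: "'a set \<Rightarrow> ('a \<times> 'a) set \<Rightarrow> bool" where
  "regular_digraph V E \<longleftrightarrow> (\<forall>v\<in>V. \<forall>w\<in>V. out_nbrs E v \<approx> out_nbrs E w)"

end

theory Submission
  imports Defs
begin

(* ---- P1 ---- *)


lemma vec3_nth: "vec3 (x,y,z) $ 1 = x" "vec3 (x,y,z) $ 2 = y" "vec3 (x,y,z) $ 3 = z"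
  by (simp_all add: vec3_def)

lemma vec3_eq_iff: "(vec3 a = vec3 b) = (a = b)"
  apply (cases a; cases b)
  apply (auto simp: vec3_def vec_eq_iff forall_3)
  done

lemma mat3_nth: "mat3 r1 r2 r3 $ 1 = vec3 r1" "mat3 r1 r2 r3 $ 2 = vec3 r2" "mat3 r1 r2 r3 $ 3 = vec3 r3"
  by (simp_all add: mat3_def)

lemma mat3_mulv: "mat3 (a1,a2,a3) (b1,b2,b3) (c1,c2,c3) *v vec3 (x,y,z) =
   vec3 (a1*x+a2*y+a3*z, b1*x+b2*y+b3*z, c1*x+c2*y+c3*z)"
  by (simp add: vec_eq_iff forall_3 matrix_vector_mult_def sum_3 mat3_def vec3_def)

lemma mat3_mul: "mat3 (a1,a2,a3) (b1,b2,b3) (c1,c2,c3) ** mat3 (d1,d2,d3) (e1,e2,e3) (f1,f2,f3) =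
   mat3 (a1*d1+a2*e1+a3*f1, a1*d2+a2*e2+a3*f2, a1*d3+a2*e3+a3*f3)
        (b1*d1+b2*e1+b3*f1, b1*d2+b2*e2+b3*f2, b1*d3+b2*e3+b3*f3)
        (c1*d1+c2*e1+c3*f1, c1*d2+c2*e2+c3*f2, c1*d3+c2*e3+c3*f3)"
  by (simp add: vec_eq_iff forall_3 matrix_matrix_mult_def sum_3 mat3_def vec3_def)

lemma mat1_mat3: "(mat 1 :: int^3^3) = mat3 (1,0,0) (0,1,0) (0,0,1)"
  by (simp add: vec_eq_iff forall_3 mat_def mat3_def vec3_def)

lemma vec3_unvec3: "vec3 (unvec3 w) = w"
  by (simp add: vec_eq_iff forall_3 unvec3_def vec3_def)
lemma unvec3_vec3: "unvec3 (vec3 t) = t"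
  by (cases t) (simp add: unvec3_def vec3_def)

lemma mat3_ex: "\<exists>r1 r2 r3. M = mat3 r1 r2 r3"
  apply (rule exI[of _ "unvec3 (M$1)"], rule exI[of _ "unvec3 (M$2)"], rule exI[of _ "unvec3 (M$3)"])
  by (simp add: vec_eq_iff forall_3 mat3_def vec3_unvec3)

datatype L = LA | LB | LC

fun lm :: "L \<Rightarrow> int^3^3" where
  "lm LA = MA" | "lm LB = MB" | "lm LC = MC"

fun act :: "L \<Rightarrow> int\<times>int\<times>int \<Rightarrow> int\<times>int\<times>int" where
  "act LA (x,y,z) = (x-2*y+2*z, 2*x-y+2*z, 2*x-2*y+3*z)"
| "act LB (x,y,z) = (x+2*y+2*z, 2*x+y+2*z, 2*x+2*y+3*z)"
| "act LC (x,y,z) = (-x+2*y+2*z, -2*x+y+2*z, -2*x+2*y+3*z)"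

fun wmat :: "L list \<Rightarrow> int^3^3" where
  "wmat [] = mat 1" | "wmat (a#w) = lm a ** wmat w"

definition wact :: "L list \<Rightarrow> int\<times>int\<times>int \<Rightarrow> int\<times>int\<times>int" where
  "wact w t = foldr act w t"

lemma wact_simps[simp]: "wact [] t = t" "wact (a#w) t = act a (wact w t)"
  by (simp_all add: wact_def)

lemma lm_mulv: "lm a *v vec3 t = vec3 (act a t)"
  by (cases a; cases t) (simp_all add: MA_def MB_def MC_def mat3_mulv algebra_simps)

lemma wmat_mulv: "wmat w *v vec3 t = vec3 (wact w t)"
  by (induction w) (simp_all add: lm_mulv matrix_vector_mul_assoc[symmetric])

lemma wmat_append: "wmat (u @ v) = wmat u ** wmat v"
  by (induction u) (simp_all add: matrix_mul_assoc)

lemma Gmon_eq: "Gmon = range wmat"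
proof
  show "Gmon \<subseteq> range wmat"
  proof
    fix M assume "M \<in> Gmon" then show "M \<in> range wmat"
    proof induction
      case id then show ?case by (metis rangeI wmat.simps(1))
    next
      case (mulA M) then obtain w where "M = wmat w" by auto
      then have "M ** MA = wmat (w @ [LA])" by (simp add: wmat_append)
      then show ?case by auto
    next
      case (mulB M) then obtain w where "M = wmat w" by auto
      then have "M ** MB = wmat (w @ [LB])" by (simp add: wmat_append)
      then show ?case by auto
    next
      case (mulC M) then obtain w where "M = wmat w" by auto
      then have "M ** MC = wmat (w @ [LC])" by (simp add: wmat_append)
      then show ?case by auto
    qed
  qed
next
  show "range wmat \<subseteq> Gmon"
  proof
    fix M assume "M \<in> range wmat" then obtain w where "M = wmat w" by auto
    moreover have "wmat w \<in> Gmon"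
    proof (induction w rule: rev_induct)
      case Nil then show ?case by (simp add: Gmon.id)
    next
      case (snoc a w) then show ?case
        by (cases a) (auto simp: wmat_append intro: Gmon.intros)
    qed
    ultimately show "M \<in> Gmon" by simp
  qed
qed


(* ---- P2 ---- *)


definition pyth :: "int\<times>int\<times>int \<Rightarrow> bool" where
  "pyth t = (case t of (x,y,z) \<Rightarrow> 0 < x \<and> 0 < y \<and> 0 < z \<and> x^2 + y^2 = z^2)"

fun fa :: "int\<times>int\<times>int \<Rightarrow> int" where "fa (x,y,z) = x + 2*y - 2*z"
fun fb :: "int\<times>int\<times>int \<Rightarrow> int" where "fb (x,y,z) = 2*x + y - 2*z"
fun fc :: "int\<times>int\<times>int \<Rightarrow> int" where "fc (x,y,z) = -2*x - 2*y + 3*z"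

lemma inv_A: "act LA (fa t, - fb t, fc t) = t" by (cases t) (simp add: algebra_simps)
lemma inv_B: "act LB (fa t, fb t, fc t) = t" by (cases t) (simp add: algebra_simps)
lemma inv_C: "act LC (- fa t, fb t, fc t) = t" by (cases t) (simp add: algebra_simps)

lemma f_act:
  "fa (act LA (x,y,z)) = x" "fb (act LA (x,y,z)) = -y" "fc (act LA (x,y,z)) = z"
  "fa (act LB (x,y,z)) = x" "fb (act LB (x,y,z)) = y" "fc (act LB (x,y,z)) = z"
  "fa (act LC (x,y,z)) = -x" "fb (act LC (x,y,z)) = y" "fc (act LC (x,y,z)) = z"
  by (simp_all add: algebra_simps)

lemma pyth_lt: assumes "pyth (x,y,z)" shows "x < z" "y < z"
proof -
  from assms have h: "0<x" "0<y" "0<z" "x^2+y^2=z^2" by (auto simp: pyth_def)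
  have "y^2 > 0" "x^2>0" using h by simp_all
  have "x^2 < z^2" using h `y^2>0` by linarith
  then show "x < z" using h by (smt (verit) power_mono)
  have "y^2 < z^2" using h `x^2>0` by linarith
  then show "y < z" using h by (smt (verit) power_mono)
qed

lemma pyth_act: assumes "pyth t" shows "pyth (act a t)"
proof -
  obtain x y z where t: "t = (x,y,z)" by (cases t)
  with assms have h: "0<x" "0<y" "0<z" "x^2+y^2=z^2" by (auto simp: pyth_def)
  have l: "x<z" "y<z" using pyth_lt assms t by auto
  show ?thesis using h l unfolding t
    by (cases a) (simp_all add: pyth_def power2_eq_square algebra_simps)
qed

lemma act_inj: assumes "pyth t1" "pyth t2" "act a t1 = act b t2"
  shows "a = b \<and> t1 = t2"
proof -
  obtain x1 y1 z1 where t1: "t1 = (x1,y1,z1)" by (cases t1)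
  obtain x2 y2 z2 where t2: "t2 = (x2,y2,z2)" by (cases t2)
  have p: "x1>0" "y1>0" "x2>0" "y2>0" using assms t1 t2 by (auto simp: pyth_def)
  have e: "fa (act a t1) = fa (act b t2)" "fb (act a t1) = fb (act b t2)" "fc (act a t1) = fc (act b t2)"
    using assms by auto
  show ?thesis using e p unfolding t1 t2
    by (cases a; cases b) (simp_all only: f_act, auto)
qed

definition s345 :: "int\<times>int\<times>int" where "s345 = (3,4,5)"

lemma pyth_s: "pyth s345" by (simp add: pyth_def s345_def)

lemma pyth_wact: "pyth t \<Longrightarrow> pyth (wact w t)"
  by (induction w) (simp_all add: pyth_act)

lemma wact_inj: "wact w1 s345 = wact w2 s345 \<Longrightarrow> w1 = w2"
proof (induction w1 arbitrary: w2)
  case Nil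
  show ?case
  proof (cases w2)
    case (Cons b w) 
    have "pyth (wact w s345)" by (rule pyth_wact[OF pyth_s])
    then obtain x y z where "wact w s345 = (x,y,z)" "y > 0" by (auto simp: pyth_def split: prod.splits)
    moreover have "s345 = act b (wact w s345)" using Nil Cons by simp
    ultimately show ?thesis by (cases b) (auto simp: s345_def)
  qed simp
next
  case (Cons a w1)
  show ?case
  proof (cases w2)
    case Nil
    have "pyth (wact w1 s345)" by (rule pyth_wact[OF pyth_s])
    then obtain x y z where "wact w1 s345 = (x,y,z)" "y > 0" by (auto simp: pyth_def split: prod.splits)
    moreover have "s345 = act a (wact w1 s345)" using Cons.prems Nil by simp
    ultimately show ?thesis by (cases a) (auto simp: s345_def)
  next
    case (Cons b w)
    have "a = b \<and> wact w1 s345 = wact w s345"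
      using act_inj[OF pyth_wact[OF pyth_s] pyth_wact[OF pyth_s]] Cons.prems Cons by simp
    then show ?thesis using Cons Cons.IH by simp
  qed
qed

definition e101 :: "int\<times>int\<times>int" where "e101 = (1,0,1)"

lemma wmat_inj: "wmat w1 = wmat w2 \<Longrightarrow> w1 = w2"
proof -
  assume "wmat w1 = wmat w2"
  then have "wmat w1 *v vec3 s345 = wmat w2 *v vec3 s345" by simp
  then show "w1 = w2" by (simp add: wmat_mulv vec3_eq_iff wact_inj)
qed


(* ---- P3 ---- *)


fun g3 :: "int\<times>int\<times>int \<Rightarrow> int" where "g3 (x,y,z) = gcd x (gcd y z)"

lemma lin3: assumes "(d::int) dvd a" "d dvd b" "d dvd c" shows "d dvd (k1*a + k2*b + k3*c)"
  using assms by (simp add: dvd_add dvd_mult)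

lemma g3_dvds: "g3 (x,y,z) dvd x" "g3 (x,y,z) dvd y" "g3 (x,y,z) dvd z"
  by (auto intro: dvd_trans[OF gcd_dvd2])

lemma g3_act: "g3 (act a t) = g3 t"
proof -
  obtain x y z where t: "t = (x,y,z)" by (cases t)
  obtain x' y' z' where u: "act a t = (x',y',z')" by (cases "act a t")
  have d0: "g3 t dvd x" "g3 t dvd y" "g3 t dvd z" unfolding t by (rule g3_dvds)+
  have "g3 t dvd x' \<and> g3 t dvd y' \<and> g3 t dvd z'" using u[unfolded t] d0
    by (cases a) (auto intro!: dvd_add dvd_diff dvd_mult)
  then have 1: "g3 t dvd g3 (act a t)" unfolding u by simp
  have fx: "fa (x',y',z') = x \<or> fa (x',y',z') = -x" "fb (x',y',z') = y \<or> fb (x',y',z') = -y"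
     "fc (x',y',z') = z"
    using u unfolding t by (cases a; auto simp: algebra_simps)+
  define g where "g = g3 (x',y',z')"
  have d: "g dvd x'" "g dvd y'" "g dvd z'" unfolding g_def by (rule g3_dvds)+
  have "g dvd fa (x',y',z')" using lin3[OF d, of 1 2 "-2"] by simp
  then have gx: "g dvd x" using fx(1) by auto
  have "g dvd fb (x',y',z')" using lin3[OF d, of 2 1 "-2"] by simp
  then have gy: "g dvd y" using fx(2) by auto
  have "g dvd fc (x',y',z')" using lin3[OF d, of "-2" "-2" 3] by simp
  then have gz: "g dvd z" using fx(3) by auto
  have "g dvd g3 t" unfolding t using gx gy gz by simp
  then have 2: "g3 (act a t) dvd g3 t" using u g_def by simp
  show ?thesis using 1 2 t u by (simp add: zdvd_antisym_nonneg)
qed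

definition ppt :: "int\<times>int\<times>int \<Rightarrow> bool" where
  "ppt t \<longleftrightarrow> pyth t \<and> even (fst (snd t)) \<and> g3 t = 1"

lemma ppt_PPT: "ppt t \<longleftrightarrow> t \<in> PPT"
  by (cases t) (auto simp: ppt_def PPT_def pyth_def)

lemma ppt_act: assumes "ppt t" shows "ppt (act a t)"
proof -
  obtain x y z where t: "t = (x,y,z)" by (cases t)
  have "even y" using assms t by (simp add: ppt_def)
  then have "even (fst (snd (act a t)))" unfolding t by (cases a) auto
  then show ?thesis using assms pyth_act g3_act unfolding ppt_def by simp
qed

lemma ppt_s: "ppt s345"
proof -
  have "gcd (3::int) (gcd 4 5) = 1" by (simp add: gcd_non_0_int)
  then show ?thesis using pyth_s by (simp add: ppt_def s345_def)
qed

lemma ppt_wact: "ppt (wact w s345)"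
  by (induction w) (simp_all add: ppt_s ppt_act)

lemma descent: assumes "ppt (x,y,z)" "(x,y,z) \<noteq> s345"
  shows "\<exists>a t'. ppt t' \<and> (x,y,z) = act a t' \<and> snd (snd t') < z"
proof -
  have h: "0<x" "0<y" "0<z" "x^2+y^2=z^2" "even y" "gcd x (gcd y z) = 1"
    using assms by (auto simp: ppt_def pyth_def)
  have lt: "x<z" "y<z" using pyth_lt assms(1) by (auto simp: ppt_def)
  define a where "a = x + 2*y - 2*z"
  define b where "b = 2*x + y - 2*z"
  define c where "c = -2*x - 2*y + 3*z"
  have "0 \<le> (x-y)^2" by simp
  then have xy: "x*y*2 \<le> z^2" using h(4) by (simp add: power2_eq_square algebra_simps)
  have "(2*x+2*y)^2 = 4*z^2 + 4*(x*y*2)" using h(4) by (simp add: power2_eq_square algebra_simps)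
  moreover have "(3*z)^2 = 9 * z^2" by simp
  moreover have "z^2 > 0" using h by simp
  ultimately have "(2*x+2*y)^2 < (3*z)^2" using xy by linarith
  then have "2*x+2*y < 3*z" using h power_less_imp_less_base[of "2*x+2*y" 2 "3*z"] by simp
  then have c0: "c > 0" by (simp add: c_def)
  have "(x+y)^2 = z^2 + 2*(x*y)" using h(4) by (simp add: power2_eq_square algebra_simps)
  moreover have "0 < x*y" using h by simp
  ultimately have "z^2 < (x+y)^2" by linarith
  then have "z < x + y" using h power_less_imp_less_base[of z 2 "x+y"] by simp
  then have cz: "c < z" by (simp add: c_def)
  have abc: "a^2 + b^2 = c^2" unfolding a_def b_def c_def using h(4)
    by (simp add: power2_eq_square algebra_simps)
  have xodd: "odd x"
  proof
    assume "even x"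
    then have "even (z^2)" using h by (metis even_add even_power zero_less_numeral)
    then have "even z" by simp
    then have "2 dvd gcd x (gcd y z)" using `even x` h(5) by simp
    then show False using h(6) by simp
  qed
  have aodd: "odd a" unfolding a_def using xodd by simp
  have beven: "even b" unfolding b_def using h(5) by simp
  have notboth: "\<not> (a < 0 \<and> b < 0)"
  proof
    assume "a < 0 \<and> b < 0"
    then have "x + 2*y < 2*z" "2*x + y < 2*z" by (auto simp: a_def b_def)
    then have "(x+2*y)^2 < (2*z)^2" "(2*x+y)^2 < (2*z)^2" using h
      by (simp_all only: power_strict_mono[of _ _ 2]; simp)+
    moreover have "(x+2*y)^2 = x^2 + 4*(x*y) + 4*y^2" "(2*x+y)^2 = 4*x^2 + 4*(x*y) + y^2"
      by (simp_all add: power2_eq_square algebra_simps)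
    moreover have "(2*z)^2 = 4*x^2+4*y^2" using h(4) by simp
    ultimately have "4*(x*y) < 3*x^2" "4*(x*y) < 3*y^2" by linarith+
    then have "x*(4*y) < x*(3*x)" "y*(4*x) < y*(3*y)"
      by (simp_all add: power2_eq_square algebra_simps)
    then have "4*y < 3*x" "4*x < 3*y" using h(1,2) by simp_all
    then show False using h(1,2) by linarith
  qed
  have t: "(x,y,z) = act LA (a,-b,c)" "(x,y,z) = act LB (a,b,c)" "(x,y,z) = act LC (-a,b,c)"
    unfolding a_def b_def c_def by (simp_all add: algebra_simps)
  have gabc: "g3 (a,b,c) = 1" using g3_act[of LB "(a,b,c)"] t(2) h(6) by simp
  have b0: "b \<noteq> 0"
  proof
    assume b0: "b = 0"
    then have "a^2 = c^2" using abc by simp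
    then have "a = c \<or> a = -c" by (simp add: power2_eq_iff)
    then show False
    proof
      assume "a = c"
      then have "c = 1" using gabc b0 c0 by simp
      then show False using t(2) b0 `a = c` assms(2) by (simp add: s345_def)
    next
      assume "a = -c"
      then show False using t(3) b0 h(2) by simp
    qed
  qed
  have a0: "a \<noteq> 0" using aodd by auto
  show ?thesis
  proof (cases "a > 0")
    case True
    show ?thesis
    proof (cases "b > 0")
      case True
      have "ppt (a,b,c)" using `a>0` True c0 abc beven gabc by (simp add: ppt_def pyth_def)
      then show ?thesis using t(2) cz by (intro exI[of _ LB] exI[of _ "(a,b,c)"]) simp
    next
      case False
      then have "b < 0" using b0 by simp
      have "ppt (a,-b,c)" using `a>0` `b<0` c0 abc beven gabc by (simp add: ppt_def pyth_def)
      then show ?thesis using t(1) cz by (intro exI[of _ LA] exI[of _ "(a,-b,c)"]) simp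
    qed
  next
    case False
    then have "a < 0" using a0 by simp
    then have "b > 0" using notboth b0 by simp
    have "ppt (-a,b,c)" using `a<0` `b>0` c0 abc beven gabc by (simp add: ppt_def pyth_def)
    then show ?thesis using t(3) cz by (intro exI[of _ LC] exI[of _ "(-a,b,c)"]) simp
  qed
qed

lemma ppt_word: "ppt t \<Longrightarrow> \<exists>w. t = wact w s345"
proof (induction "nat (snd (snd t))" arbitrary: t rule: less_induct)
  case less
  obtain x y z where t: "t = (x,y,z)" by (cases t)
  show ?case
  proof (cases "t = s345")
    case True then show ?thesis by (metis wact_simps(1))
  next
    case False
    then obtain a t' where h1: "ppt t'" and h2: "t = act a t'" and h3: "snd (snd t') < z"
      using descent less.prems t by blast
    have "snd (snd t') > 0" using h1 by (cases t') (simp add: ppt_def pyth_def)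
    then have "nat (snd (snd t')) < nat (snd (snd t))" using h3 unfolding t by simp
    then obtain w where "t' = wact w s345" using less.hyps h1 by blast
    then show ?thesis using h2 by (metis wact_simps(2))
  qed
qed


(* ---- P4 ---- *)


lemma no_3sq: "(x::int)^2 = 3 * y^2 \<Longrightarrow> y = 0"
proof (induction "nat \<bar>y\<bar>" arbitrary: x y rule: less_induct)
  case less
  show ?case
  proof (rule ccontr)
    assume y0: "y \<noteq> 0"
    have "3 dvd x^2" using less.prems by simp
    then have "3 dvd x" using prime_dvd_power_int[of 3 x 2] by simp
    then obtain k where k: "x = 3*k" by blast
    then have "y^2 = 3 * k^2" using less.prems by (simp add: power2_eq_square)
    moreover have "nat \<bar>k\<bar> < nat \<bar>y\<bar>"
    proof -
      have "k \<noteq> 0" using `y^2 = 3*k^2` y0 by auto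
      then have "k^2 > 0" by simp
      then have "k^2 < y^2" using `y^2 = 3*k^2` by linarith
      then have "\<bar>k\<bar> < \<bar>y\<bar>" using abs_le_square_iff[of y k] by (metis not_le)
      then show ?thesis by simp
    qed
    ultimately have "k = 0" using less.hyps by blast
    then have "y^2 = 0" using `y^2 = 3*k^2` by simp
    then show False using y0 by simp
  qed
qed

fun lowt :: "int\<times>int\<times>int \<Rightarrow> bool" where "lowt (x,y,z) = (2*x < z)"
fun hight :: "int\<times>int\<times>int \<Rightarrow> bool" where "hight (x,y,z) = (2*y < z)"

lemma pyth_ne2: assumes "pyth (x,y,z)" shows "2*x \<noteq> z" "2*y \<noteq> z"
proof -
  have h: "0<x" "0<y" "x^2+y^2=z^2" using assms by (auto simp: pyth_def)
  show "2*x \<noteq> z"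
  proof
    assume "2*x = z"
    then have "x^2 + y^2 = (2*x)^2" using h(3) by simp
    then have "y^2 = 3*x^2" by (simp add: power2_eq_square algebra_simps)
    then show False using no_3sq h(1) by auto
  qed
  show "2*y \<noteq> z"
  proof
    assume "2*y = z"
    then have "x^2 + y^2 = (2*y)^2" using h(3) by simp
    then have "x^2 = 3*y^2" by (simp add: power2_eq_square algebra_simps)
    then show False using no_3sq h(2) by auto
  qed
qed

lemma lowhigh_act: assumes "pyth t"
  shows "lowt (act LA t) = (\<not> hight t)" "hight (act LA t) = False"
        "lowt (act LB t) = False" "hight (act LB t) = False"
        "lowt (act LC t) = False" "hight (act LC t) = (\<not> lowt t)"
proof -
  obtain x y z where t: "t = (x,y,z)" by (cases t)
  have p: "pyth (x,y,z)" using assms t by simp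
  have h: "0<x" "0<y" "0<z" using p by (auto simp: pyth_def)
  have n: "2*x \<noteq> z" "2*y \<noteq> z" using pyth_ne2[OF p] by auto
  show "lowt (act LA t) = (\<not> hight t)" "hight (act LA t) = False"
        "lowt (act LB t) = False" "hight (act LB t) = False"
        "lowt (act LC t) = False" "hight (act LC t) = (\<not> lowt t)"
    unfolding t using h n by auto
qed

fun lowW :: "L list \<Rightarrow> bool" and highW :: "L list \<Rightarrow> bool" where
  "lowW [] = False"
| "lowW (a#w) = (a = LA \<and> \<not> highW w)"
| "highW [] = False"
| "highW (a#w) = (a = LC \<and> \<not> lowW w)"

lemma lowhigh_wact: "lowt (wact w s345) = lowW w \<and> hight (wact w s345) = highW w"
proof (induction w)
  case Nil then show ?case by (simp add: s345_def)
next
  case (Cons a w)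
  have p: "pyth (wact w s345)" by (rule pyth_wact[OF pyth_s])
  show ?case using lowhigh_act[OF p] Cons by (cases a) auto
qed

definition good :: "L list \<Rightarrow> bool" where "good w \<longleftrightarrow> lowW w \<or> highW w"

fun P2 :: "int\<times>int\<times>int \<Rightarrow> bool" where "P2 (x,y,z) = (2 * min x y < z)"

lemma P2_lowhigh: "P2 t = (lowt t \<or> hight t)"
  by (cases t) (auto simp: min_def)

lemma P2_good: "P2 (wact w s345) = good w"
  using lowhigh_wact[of w] by (simp add: P2_lowhigh good_def)

definition AC :: "nat \<Rightarrow> L list" where "AC k = concat (replicate k [LA, LC])"
definition CA :: "nat \<Rightarrow> L list" where "CA k = concat (replicate k [LC, LA])"

lemma AC_Suc: "AC (Suc k) = LA # LC # AC k" by (simp add: AC_def)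
lemma CA_Suc: "CA (Suc k) = LC # LA # CA k" by (simp add: CA_def)
lemma AC_0[simp]: "AC 0 = []" by (simp add: AC_def)
lemma CA_0[simp]: "CA 0 = []" by (simp add: CA_def)

lemma lowW_AC: "lowW (AC k @ w) = lowW w"
  by (induction k) (simp_all add: AC_Suc)
lemma highW_CA: "highW (CA k @ w) = highW w"
  by (induction k) (simp_all add: CA_Suc)

lemma lowW_shape: "lowW w \<Longrightarrow> \<exists>k n. w = AC k @ [LA] \<or> w = AC k @ LA # LA # n \<or> w = AC k @ LA # LB # n"
proof (induction "length w" arbitrary: w rule: less_induct)
  case less
  then obtain w' where w: "w = LA # w'" "\<not> highW w'" by (cases w) auto
  show ?case
  proof (cases w')
    case Nil then show ?thesis using w by (metis AC_0 append_Nil)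
  next
    case (Cons b w'')
    show ?thesis
    proof (cases b)
      case LA then show ?thesis using w Cons by (metis AC_0 append_Nil)
    next
      case LB then show ?thesis using w Cons by (metis AC_0 append_Nil)
    next
      case LC
      then have "lowW w''" using w Cons by simp
      moreover have "length w'' < length w" using w Cons by simp
      ultimately obtain k n where "w'' = AC k @ [LA] \<or> w'' = AC k @ LA # LA # n \<or> w'' = AC k @ LA # LB # n"
        using less.hyps by blast
      then have "w = AC (Suc k) @ [LA] \<or> w = AC (Suc k) @ LA # LA # n \<or> w = AC (Suc k) @ LA # LB # n"
        using w Cons LC by (auto simp: AC_Suc)
      then show ?thesis by blast
    qed
  qed
qed

lemma highW_shape: "highW w \<Longrightarrow> \<exists>k n. w = CA k @ [LC] \<or> w = CA k @ LC # LC # n \<or> w = CA k @ LC # LB # n"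
proof (induction "length w" arbitrary: w rule: less_induct)
  case less
  then obtain w' where w: "w = LC # w'" "\<not> lowW w'" by (cases w) auto
  show ?case
  proof (cases w')
    case Nil then show ?thesis using w by (metis CA_0 append_Nil)
  next
    case (Cons b w'')
    show ?thesis
    proof (cases b)
      case LC then show ?thesis using w Cons by (metis CA_0 append_Nil)
    next
      case LB then show ?thesis using w Cons by (metis CA_0 append_Nil)
    next
      case LA
      then have "highW w''" using w Cons by simp
      moreover have "length w'' < length w" using w Cons by simp
      ultimately obtain k n where "w'' = CA k @ [LC] \<or> w'' = CA k @ LC # LC # n \<or> w'' = CA k @ LC # LB # n"
        using less.hyps by blast
      then have "w = CA (Suc k) @ [LC] \<or> w = CA (Suc k) @ LC # LC # n \<or> w = CA (Suc k) @ LC # LB # n"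
        using w Cons LA by (auto simp: CA_Suc)
      then show ?thesis by blast
    qed
  qed
qed


(* ---- P5 ---- *)


lemma mpow_wmat: "mpow (wmat u) k = wmat (concat (replicate k u))"
proof (induction k)
  case 0 then show ?case by simp
next
  case (Suc k)
  have "mpow (wmat u) (Suc k) = wmat u ** mpow (wmat u) k" by simp
  also have "\<dots> = wmat u ** wmat (concat (replicate k u))" using Suc by simp
  also have "\<dots> = wmat (u @ concat (replicate k u))" by (simp only: wmat_append)
  finally show ?case by simp
qed

lemma MA_w: "MA = wmat [LA]" by simp
lemma MB_w: "MB = wmat [LB]" by simp
lemma MC_w: "MC = wmat [LC]" by simp
lemma MAC_w: "MA ** MC = wmat [LA, LC]" by (simp add: wmat_append[of "[LA]" "[LC]", simplified])
lemma MCA_w: "MC ** MA = wmat [LC, LA]" by (simp add: wmat_append[of "[LC]" "[LA]", simplified])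

lemma mpowA: "mpow MA k = wmat (replicate k LA)"
proof -
  have "mpow MA k = wmat (concat (replicate k [LA]))" using mpow_wmat[of "[LA]" k] by (simp only: MA_w)
  then show ?thesis by (simp add: concat_replicate_single)
qed
lemma mpowC: "mpow MC k = wmat (replicate k LC)"
proof -
  have "mpow MC k = wmat (concat (replicate k [LC]))" using mpow_wmat[of "[LC]" k] by (simp only: MC_w)
  then show ?thesis by (simp add: concat_replicate_single)
qed
lemma mpowAC: "mpow (MA ** MC) k = wmat (AC k)"
  unfolding MAC_w mpow_wmat AC_def ..
lemma mpowCA: "mpow (MC ** MA) k = wmat (CA k)"
  unfolding MCA_w mpow_wmat CA_def ..

definition HW :: "L list set" where "HW = {w @ [LB] | w. good w}"

lemma wm: "wmat u ** wmat v = wmat (u @ v)" by (simp add: wmat_append)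

lemma good_AA: "good (LA # LA # n)" by (simp add: good_def)
lemma good_AB: "good (LA # LB # n)" by (simp add: good_def)
lemma good_CC: "good (LC # LC # n)" by (simp add: good_def)
lemma good_CB: "good (LC # LB # n)" by (simp add: good_def)
lemma good_Ak: "0 < k \<Longrightarrow> good (replicate k LA)"
  by (cases k) (auto simp: good_def, cases "k - 1", auto)
lemma good_Ck: "0 < k \<Longrightarrow> good (replicate k LC)"
  by (cases k) (auto simp: good_def, cases "k - 1", auto)
lemma good_AC: "good (AC k @ w) = (lowW w \<or> (k = 0 \<and> highW w))"
  by (cases k) (auto simp: good_def lowW_AC AC_Suc)
lemma good_CA: "good (CA k @ w) = (highW w \<or> (k = 0 \<and> lowW w))"
  by (cases k) (auto simp: good_def highW_CA CA_Suc)


(* ---- P6 ---- *)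


lemmas wsimp = MA_w MB_w MC_w mpow_wmat wm append.simps append_assoc concat_replicate_single AC_def CA_def replicate_0 concat.simps

lemma Hset_sub: "Hset \<subseteq> wmat ` HW"
proof
  fix M assume "M \<in> Hset"
  then obtain N k where N: "N \<in> Gmon" and k: "0 < k" and
    M: "M = MA ** MA ** N ** MB \<or> M = mpow MA k ** MB \<or> M = MA ** MB ** N ** MB \<or>
      M = MC ** MC ** N ** MB \<or> M = mpow MC k ** MB \<or> M = MC ** MB ** N ** MB \<or>
      M = mpow (MA ** MC) k ** MA ** MA ** N ** MB \<or>
      M = mpow (MA ** MC) k ** MA ** MB ** N ** MB \<or>
      M = mpow (MA ** MC) k ** MA ** MB \<or>
      M = mpow (MC ** MA) k ** MC ** MC ** N ** MB \<or>
      M = mpow (MC ** MA) k ** MC ** MB ** N ** MB \<or>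
      M = mpow (MC ** MA) k ** MC ** MB"
    unfolding Hset_def by blast
  from N obtain n where n: "N = wmat n" using Gmon_eq by auto
  have inHW: "\<And>w. good w \<Longrightarrow> wmat (w @ [LB]) \<in> wmat ` HW" unfolding HW_def by blast
  have gAC: "\<And>w. lowW w \<Longrightarrow> good (AC k @ w)" using good_AC by blast
  have gCA: "\<And>w. highW w \<Longrightarrow> good (CA k @ w)" using good_CA by blast
  from M show "M \<in> wmat ` HW"
  proof (elim disjE)
    assume "M = MA ** MA ** N ** MB"
    then have "M = wmat ((LA # LA # n) @ [LB])" unfolding n by (simp only: wsimp)
    then show ?thesis using inHW[OF good_AA] by simp
  next
    assume "M = mpow MA k ** MB"
    then have "M = wmat (replicate k LA @ [LB])" by (simp only: wsimp)
    then show ?thesis using inHW[OF good_Ak[OF k]] by simp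
  next
    assume "M = MA ** MB ** N ** MB"
    then have "M = wmat ((LA # LB # n) @ [LB])" unfolding n by (simp only: wsimp)
    then show ?thesis using inHW[OF good_AB] by simp
  next
    assume "M = MC ** MC ** N ** MB"
    then have "M = wmat ((LC # LC # n) @ [LB])" unfolding n by (simp only: wsimp)
    then show ?thesis using inHW[OF good_CC] by simp
  next
    assume "M = mpow MC k ** MB"
    then have "M = wmat (replicate k LC @ [LB])" by (simp only: wsimp)
    then show ?thesis using inHW[OF good_Ck[OF k]] by simp
  next
    assume "M = MC ** MB ** N ** MB"
    then have "M = wmat ((LC # LB # n) @ [LB])" unfolding n by (simp only: wsimp)
    then show ?thesis using inHW[OF good_CB] by simp
  next
    assume "M = mpow (MA ** MC) k ** MA ** MA ** N ** MB"
    then have "M = wmat ((AC k @ LA # LA # n) @ [LB])" unfolding n by (simp only: wsimp)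
    moreover have "good (AC k @ LA # LA # n)" by (rule gAC) simp
    ultimately show ?thesis using inHW by metis
  next
    assume "M = mpow (MA ** MC) k ** MA ** MB ** N ** MB"
    then have "M = wmat ((AC k @ LA # LB # n) @ [LB])" unfolding n by (simp only: wsimp)
    moreover have "good (AC k @ LA # LB # n)" by (rule gAC) simp
    ultimately show ?thesis using inHW by metis
  next
    assume "M = mpow (MA ** MC) k ** MA ** MB"
    then have "M = wmat ((AC k @ [LA]) @ [LB])" by (simp only: wsimp)
    moreover have "good (AC k @ [LA])" by (rule gAC) simp
    ultimately show ?thesis using inHW by metis
  next
    assume "M = mpow (MC ** MA) k ** MC ** MC ** N ** MB"
    then have "M = wmat ((CA k @ LC # LC # n) @ [LB])" unfolding n by (simp only: wsimp)
    moreover have "good (CA k @ LC # LC # n)" by (rule gCA) simp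
    ultimately show ?thesis using inHW by metis
  next
    assume "M = mpow (MC ** MA) k ** MC ** MB ** N ** MB"
    then have "M = wmat ((CA k @ LC # LB # n) @ [LB])" unfolding n by (simp only: wsimp)
    moreover have "good (CA k @ LC # LB # n)" by (rule gCA) simp
    ultimately show ?thesis using inHW by metis
  next
    assume "M = mpow (MC ** MA) k ** MC ** MB"
    then have "M = wmat ((CA k @ [LC]) @ [LB])" by (simp only: wsimp)
    moreover have "good (CA k @ [LC])" by (rule gCA) simp
    ultimately show ?thesis using inHW by metis
  qed
qed

lemma Hset_sup: "wmat ` HW \<subseteq> Hset"
proof
  fix M assume "M \<in> wmat ` HW"
  then obtain w where M: "M = wmat (w @ [LB])" and g: "good w" unfolding HW_def by blast
  have G: "\<And>n. wmat n \<in> Gmon" using Gmon_eq by auto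
  from g show "M \<in> Hset"
  proof (unfold good_def, elim disjE)
    assume "lowW w"
    then obtain k n where "w = AC k @ [LA] \<or> w = AC k @ LA # LA # n \<or> w = AC k @ LA # LB # n"
      using lowW_shape by blast
    then show ?thesis
    proof (elim disjE)
      assume w: "w = AC k @ [LA]"
      show ?thesis
      proof (cases k)
        case 0
        have "M = mpow MA 1 ** MB" unfolding M w 0 by simp
        then show ?thesis unfolding Hset_def using G by blast
      next
        case (Suc j)
        have "M = mpow (MA ** MC) k ** MA ** MB" unfolding M w by (simp only: wsimp)
        then show ?thesis unfolding Hset_def using G Suc by blast
      qed
    next
      assume w: "w = AC k @ LA # LA # n"
      show ?thesis
      proof (cases k)
        case 0
        have "M = MA ** MA ** wmat n ** MB" unfolding M w 0 by (simp only: wsimp AC_0)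
        then show ?thesis unfolding Hset_def using G[of n] by blast
      next
        case (Suc j)
        have "M = mpow (MA ** MC) k ** MA ** MA ** wmat n ** MB" unfolding M w by (simp only: wsimp)
        then show ?thesis unfolding Hset_def using G[of n] Suc by blast
      qed
    next
      assume w: "w = AC k @ LA # LB # n"
      show ?thesis
      proof (cases k)
        case 0
        have "M = MA ** MB ** wmat n ** MB" unfolding M w 0 by (simp only: wsimp AC_0)
        then show ?thesis unfolding Hset_def using G[of n] by blast
      next
        case (Suc j)
        have "M = mpow (MA ** MC) k ** MA ** MB ** wmat n ** MB" unfolding M w by (simp only: wsimp)
        then show ?thesis unfolding Hset_def using G[of n] Suc by blast
      qed
    qed
  next
    assume "highW w"
    then obtain k n where "w = CA k @ [LC] \<or> w = CA k @ LC # LC # n \<or> w = CA k @ LC # LB # n"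
      using highW_shape by blast
    then show ?thesis
    proof (elim disjE)
      assume w: "w = CA k @ [LC]"
      show ?thesis
      proof (cases k)
        case 0
        have "M = mpow MC 1 ** MB" unfolding M w 0 by simp
        then show ?thesis unfolding Hset_def using G by blast
      next
        case (Suc j)
        have "M = mpow (MC ** MA) k ** MC ** MB" unfolding M w by (simp only: wsimp)
        then show ?thesis unfolding Hset_def using G Suc by blast
      qed
    next
      assume w: "w = CA k @ LC # LC # n"
      show ?thesis
      proof (cases k)
        case 0
        have "M = MC ** MC ** wmat n ** MB" unfolding M w 0 by (simp only: wsimp CA_0)
        then show ?thesis unfolding Hset_def using G[of n] by blast
      next
        case (Suc j)
        have "M = mpow (MC ** MA) k ** MC ** MC ** wmat n ** MB" unfolding M w by (simp only: wsimp)
        then show ?thesis unfolding Hset_def using G[of n] Suc by blast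
      qed
    next
      assume w: "w = CA k @ LC # LB # n"
      show ?thesis
      proof (cases k)
        case 0
        have "M = MC ** MB ** wmat n ** MB" unfolding M w 0 by (simp only: wsimp CA_0)
        then show ?thesis unfolding Hset_def using G[of n] by blast
      next
        case (Suc j)
        have "M = mpow (MC ** MA) k ** MC ** MB ** wmat n ** MB" unfolding M w by (simp only: wsimp)
        then show ?thesis unfolding Hset_def using G[of n] Suc by blast
      qed
    qed
  qed
qed

lemma Hset_eq: "Hset = wmat ` HW" using Hset_sub Hset_sup by blast

lemma H'_eq: "H' = wmat ` (HW \<union> {[]})" unfolding H'_def Hset_eq by simp


(* ---- P7 ---- *)


lemma lowhigh_B: "lowW (x @ LB # y) = lowW x \<and> highW (x @ LB # y) = highW x"
  by (induction x) auto

lemma good_B: "good (x @ LB # y) = good x"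
  using lowhigh_B by (simp add: good_def)

definition MW :: "L list set" where "MW = HW \<union> {[]}"

lemma HW_ne: "h \<in> HW \<Longrightarrow> h \<noteq> []" unfolding HW_def by auto

lemma HW_app: "a \<in> HW \<Longrightarrow> b \<in> HW \<Longrightarrow> a @ b \<in> HW"
proof -
  assume "a \<in> HW" "b \<in> HW"
  then obtain x y where a: "a = x @ [LB]" "good x" and b: "b = y @ [LB]" "good y" unfolding HW_def by blast
  have "a @ b = (x @ LB # y) @ [LB]" using a b by simp
  moreover have "good (x @ LB # y)" using good_B a by simp
  ultimately show ?thesis unfolding HW_def by blast
qed

lemma MW_app: "a \<in> MW \<Longrightarrow> b \<in> MW \<Longrightarrow> a @ b \<in> MW"
  unfolding MW_def using HW_app by auto

lemma MW_stable: assumes "w \<in> MW" "u @ v \<in> MW" "v @ w \<in> MW" "u \<in> MW" shows "v \<in> MW"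
proof (cases "v = [] \<or> u = [] \<or> w = []")
  case True then show ?thesis using assms by (auto simp: MW_def)
next
  case False
  then have ne: "v \<noteq> []" "u \<noteq> []" "w \<noteq> []" by auto
  have "u @ v \<in> HW" using assms(2) ne unfolding MW_def by auto
  then obtain g where g: "u @ v = g @ [LB]" unfolding HW_def by blast
  have "last v = LB" using arg_cong[OF g, of last] ne by simp
  then obtain v' where v: "v = v' @ [LB]" using ne(1) by (metis append_butlast_last_id)
  have "w \<in> HW" using assms(1) ne unfolding MW_def by auto
  then obtain w' where w: "w = w' @ [LB]" unfolding HW_def by blast
  have "v @ w \<in> HW" using assms(3) ne unfolding MW_def by auto
  then obtain h where h: "v @ w = h @ [LB]" "good h" unfolding HW_def by blast
  have "h = v' @ LB # w'" using h(1) v w by simp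
  then have "good v'" using h(2) good_B by simp
  then show ?thesis using v unfolding MW_def HW_def by blast
qed

definition atoms :: "L list set" where
  "atoms = {h \<in> HW. \<not> (\<exists>a b. a \<in> HW \<and> b \<in> HW \<and> h = a @ b)}"

lemma wp_concat: "word_prod (@) [] xs = concat xs"
  unfolding word_prod_def by (induction xs) auto

lemma Nil_MW: "[] \<in> MW" by (simp add: MW_def)

lemma concat_MW: "set xs \<subseteq> MW \<Longrightarrow> concat xs \<in> MW"
proof (induction xs)
  case Nil then show ?case by (simp add: Nil_MW)
next
  case (Cons x xs) then show ?case by (simp add: MW_app)
qed

lemma atoms_factor: "m \<in> MW \<Longrightarrow> \<exists>xs. set xs \<subseteq> atoms \<and> concat xs = m"
proof (induction "length m" arbitrary: m rule: less_induct)
  case less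
  show ?case
  proof (cases "m = []")
    case True then show ?thesis by (intro exI[of _ "[]"]) simp
  next
    case False
    then have m: "m \<in> HW" using less.prems unfolding MW_def by auto
    show ?thesis
    proof (cases "m \<in> atoms")
      case True then show ?thesis by (intro exI[of _ "[m]"]) simp
    next
      case False
      then obtain a b where ab: "a \<in> HW" "b \<in> HW" "m = a @ b" using m unfolding atoms_def by blast
      have "a \<noteq> []" "b \<noteq> []" using ab HW_ne by auto
      then have "length a < length m" "length b < length m" using ab by auto
      moreover have "a \<in> MW" "b \<in> MW" using ab unfolding MW_def by auto
      ultimately obtain xs ys where "set xs \<subseteq> atoms" "concat xs = a" "set ys \<subseteq> atoms" "concat ys = b"
        using less.hyps by meson
      then show ?thesis using ab by (intro exI[of _ "xs @ ys"]) auto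
    qed
  qed
qed

lemma atoms_MW: "atoms \<subseteq> MW" unfolding atoms_def MW_def by auto

lemma atoms_unique: "set xs \<subseteq> atoms \<Longrightarrow> set ys \<subseteq> atoms \<Longrightarrow> concat xs = concat ys \<Longrightarrow> xs = ys"
proof (induction xs arbitrary: ys)
  case Nil
  then show ?case using atoms_def HW_ne by (cases ys) auto
next
  case (Cons x xs)
  show ?case
  proof (cases ys)
    case Nil then show ?thesis using Cons.prems atoms_def HW_ne by auto
  next
    case (Cons y ys')
    have x: "x \<in> atoms" and y: "y \<in> atoms" using Cons.prems `ys = y # ys'` by auto
    have xsM: "concat xs \<in> MW" using Cons.prems(1) atoms_MW concat_MW by auto
    have ysM: "concat ys' \<in> MW" using Cons.prems(2) `ys = y # ys'` atoms_MW concat_MW by auto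
    have eq: "x @ concat xs = y @ concat ys'" using Cons.prems `ys = y # ys'` by simp
    have "x = y"
    proof (cases "length x \<le> length y")
      case True
      then obtain v where v: "y = x @ v" "concat xs = v @ concat ys'" using eq
        by (metis append_eq_append_conv_if append_eq_conv_conj)
      have "v \<in> MW" using MW_stable[OF ysM _ _ ] x y atoms_MW v xsM by auto
      show ?thesis
      proof (rule ccontr)
        assume "x \<noteq> y"
        then have "v \<noteq> []" using v by auto
        then have "v \<in> HW" using `v \<in> MW` MW_def by auto
        then show False using y x v unfolding atoms_def by blast
      qed
    next
      case False
      then obtain v where v: "x = y @ v" "concat ys' = v @ concat xs" using eq
        by (metis append_eq_append_conv_if append_eq_conv_conj nat_le_linear)
      have "v \<in> MW" using MW_stable[OF xsM _ _ ] x y atoms_MW v ysM by auto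
      show ?thesis
      proof (rule ccontr)
        assume "x \<noteq> y"
        then have "v \<noteq> []" using v by auto
        then have "v \<in> HW" using `v \<in> MW` MW_def by auto
        then show False using y x v unfolding atoms_def by blast
      qed
    qed
    then have "xs = ys'" using Cons.IH Cons.prems `ys = y # ys'` eq by auto
    then show ?thesis using `x = y` `ys = y # ys'` by simp
  qed
qed

lemma MW_monoid: "is_monoid MW (@) []"
  unfolding is_monoid_def using MW_app Nil_MW by auto

lemma MW_free_basis: "free_basis MW (@) [] atoms"
  unfolding free_basis_def wp_concat
  using atoms_MW atoms_factor atoms_unique by blast

lemma atom_Ak: "0 < k \<Longrightarrow> replicate k LA @ [LB] \<in> atoms"
proof -
  assume k: "0 < k"
  have h: "replicate k LA @ [LB] \<in> HW" unfolding HW_def using good_Ak[OF k] by blast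
  show ?thesis unfolding atoms_def
  proof (safe intro!: h)
    fix a b assume ab: "a \<in> HW" "b \<in> HW" "replicate k LA @ [LB] = a @ b"
    obtain a' where a': "a = a' @ [LB]" using ab(1) unfolding HW_def by blast
    have "b \<noteq> []" using ab(2) HW_ne by auto
    then have "length a < length (replicate k LA @ [LB])" using ab(3) by (metis length_append less_add_same_cancel1 length_greater_0_conv)
    then have "(replicate k LA @ [LB]) ! (length a - 1) = LA"
      using a' by (auto simp: nth_append)
    moreover have "(replicate k LA @ [LB]) ! (length a - 1) = LB" using ab(3) a' by (simp add: nth_append)
    ultimately show False by simp
  qed
qed

lemma atoms_infinite: "infinite atoms"
proof -
  have "inj (\<lambda>k. replicate (Suc k) LA @ [LB])" by (rule injI) simp
  then have "infinite (range (\<lambda>k. replicate (Suc k) LA @ [LB]))" by (simp add: range_inj_infinite)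
  moreover have "range (\<lambda>k. replicate (Suc k) LA @ [LB]) \<subseteq> atoms" using atom_Ak zero_less_Suc by blast
  ultimately show ?thesis using finite_subset by blast
qed

lemma gen_contains_atoms: assumes "generates MW (@) [] F" shows "atoms \<subseteq> F"
proof
  fix a assume a: "a \<in> atoms"
  then have "a \<in> MW" using atoms_MW by auto
  then obtain xs where xs: "set xs \<subseteq> F" "concat xs = a" using assms unfolding generates_def wp_concat by blast
  have F: "F \<subseteq> MW" using assms unfolding generates_def by auto
  show "a \<in> F"
  proof -
    let ?ys = "filter (\<lambda>x. x \<noteq> []) xs"
    have "concat ?ys = concat xs" by (induction xs) auto
    then have c: "concat ?ys = a" using xs(2) by simp
    have sy: "set ?ys \<subseteq> HW" using xs(1) F unfolding MW_def by auto
    have "a \<noteq> []" using a atoms_def HW_ne by auto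
    then obtain y ys where yy: "?ys = y # ys" using c by (cases ?ys) auto
    show ?thesis
    proof (cases ys)
      case Nil
      then have "a = y" using c yy by simp
      moreover have "y \<in> set ?ys" using yy by simp
      then have "y \<in> set xs" by simp
      ultimately show ?thesis using xs(1) by auto
    next
      case (Cons z zs)
      have "y \<in> HW" using sy yy by auto
      moreover have "concat ys \<in> HW"
      proof -
        have "set ys \<subseteq> HW" using sy yy by auto
        then have "concat ys \<in> MW" using concat_MW unfolding MW_def by auto
        moreover have "concat ys \<noteq> []" using Cons `set ys \<subseteq> HW` HW_ne by auto
        ultimately show ?thesis unfolding MW_def by auto
      qed
      moreover have "a = y @ concat ys" using c yy by simp
      ultimately show ?thesis using a unfolding atoms_def by blast
    qed
  qed
qed

lemma MW_inf_gen: "infinitely_generated MW (@) []"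
  unfolding infinitely_generated_def
  using gen_contains_atoms atoms_infinite finite_subset by blast

lemma MW_noncomm: "\<exists>a\<in>MW. \<exists>b\<in>MW. a @ b \<noteq> b @ a"
proof -
  have "[LA, LB] \<in> MW" "[LC, LB] \<in> MW" unfolding MW_def HW_def good_def
    by (auto intro!: exI[of _ "[LA]"] exI[of _ "[LC]"])
  moreover have "[LA, LB] @ [LC, LB] \<noteq> [LC, LB] @ [LA, LB]" by simp
  ultimately show ?thesis by blast
qed


(* ---- P8 ---- *)


lemma wact_append: "wact (u @ v) t = wact u (wact v t)"
  by (simp add: wact_def)

lemma H'_MW: "H' = wmat ` MW" unfolding H'_eq MW_def ..

lemma val_MW: "u \<in> MW \<Longrightarrow> wact u (1,0,1) \<in> PP"
proof -
  assume "u \<in> MW"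
  then consider "u = []" | w where "u = w @ [LB]" "good w" unfolding MW_def HW_def by blast
  then show ?thesis
  proof cases
    case 1 then show ?thesis by (simp add: PP_def)
  next
    case 2
    have "wact u (1,0,1) = wact w s345" using 2 by (simp add: wact_append s345_def)
    moreover have "wact w s345 \<in> PPT" using ppt_wact ppt_PPT by blast
    moreover have "P2 (wact w s345)" using P2_good 2 by simp
    ultimately show ?thesis unfolding PP_def
      by (cases "wact w s345") auto
  qed
qed

lemma PP_word: "t \<in> PP \<Longrightarrow> \<exists>u\<in>MW. wact u (1,0,1) = t"
proof -
  assume t: "t \<in> PP"
  show ?thesis
  proof (cases "t = (1,0,1)")
    case True then show ?thesis using Nil_MW by force
  next
    case False
    then have "t \<in> PPT" "P2 t" using t unfolding PP_def by (cases t; auto)+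
    then obtain w where w: "t = wact w s345" using ppt_word ppt_PPT by blast
    then have "good w" using P2_good `P2 t` by simp
    then have "w @ [LB] \<in> MW" unfolding MW_def HW_def by blast
    moreover have "wact (w @ [LB]) (1,0,1) = t" using w by (simp add: wact_append s345_def)
    ultimately show ?thesis by blast
  qed
qed

lemma val_inj: "u1 \<in> MW \<Longrightarrow> u2 \<in> MW \<Longrightarrow> wact u1 (1,0,1) = wact u2 (1,0,1) \<Longrightarrow> u1 = u2"
proof -
  assume u: "u1 \<in> MW" "u2 \<in> MW" "wact u1 (1,0,1) = wact u2 (1,0,1)"
  have key: "\<And>w. wact (w @ [LB]) (1,0,1) = wact w s345" by (simp add: wact_append s345_def)
  have nz: "\<And>w. wact w s345 \<noteq> (1,0,1)"
  proof
    fix w assume "wact w s345 = (1,0,1)"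
    moreover have "pyth (wact w s345)" by (rule pyth_wact[OF pyth_s])
    ultimately show False by (simp add: pyth_def)
  qed
  from u(1) consider "u1 = []" | w1 where "u1 = w1 @ [LB]" unfolding MW_def HW_def by blast
  then show ?thesis
  proof cases
    case 1
    from u(2) consider "u2 = []" | w2 where "u2 = w2 @ [LB]" unfolding MW_def HW_def by blast
    then show ?thesis
    proof cases
      case 1 then show ?thesis using `u1 = []` by simp
    next
      case 2 then show ?thesis using `u1 = []` u(3) key nz by (metis wact_simps(1))
    qed
  next
    case 2
    from u(2) consider "u2 = []" | w2 where "u2 = w2 @ [LB]" unfolding MW_def HW_def by blast
    then show ?thesis
    proof cases
      case 1 then show ?thesis using `u1 = w1 @ [LB]` u(3) key nz by (metis wact_simps(1))
    next
      case (2 w2) then show ?thesis using `u1 = w1 @ [LB]` u(3) key wact_inj by metis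
    qed
  qed
qed

lemma wmat_val: "wmat u *v vec3 (1,0,1) = vec3 (wact u (1,0,1))"
  by (rule wmat_mulv)

lemma H'_val_PP: "M \<in> H' \<Longrightarrow> unvec3 (M *v vec3 (1,0,1)) \<in> PP"
  unfolding H'_MW using val_MW by (auto simp: wmat_val unvec3_vec3)

lemma H'_ex1: "t \<in> PP \<Longrightarrow> \<exists>!M. M \<in> H' \<and> M *v vec3 (1, 0, 1) = vec3 t"
proof -
  assume t: "t \<in> PP"
  then obtain u where u: "u \<in> MW" "wact u (1,0,1) = t" using PP_word by blast
  show ?thesis
  proof (rule ex1I[of _ "wmat u"])
    show "wmat u \<in> H' \<and> wmat u *v vec3 (1, 0, 1) = vec3 t" using u H'_MW wmat_val by auto
  next
    fix M assume M: "M \<in> H' \<and> M *v vec3 (1, 0, 1) = vec3 t"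
    then obtain u' where u': "u' \<in> MW" "M = wmat u'" using H'_MW by auto
    have "wact u' (1,0,1) = t" using M u' wmat_val vec3_eq_iff by metis
    then have "u' = u" using val_inj u u' by simp
    then show "M = wmat u" using u' by simp
  qed
qed

lemma phi_PP: "t \<in> PP \<Longrightarrow> phi t \<in> H' \<and> phi t *v vec3 (1, 0, 1) = vec3 t"
  unfolding phi_def using H'_ex1 by (rule theI')

lemma phi_val: "M \<in> H' \<Longrightarrow> phi (unvec3 (M *v vec3 (1,0,1))) = M"
proof -
  assume M: "M \<in> H'"
  let ?t = "unvec3 (M *v vec3 (1,0,1))"
  have t: "?t \<in> PP" using H'_val_PP M by blast
  have "M \<in> H' \<and> M *v vec3 (1, 0, 1) = vec3 ?t" using M by (simp add: vec3_unvec3)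
  then show ?thesis using phi_PP[OF t] H'_ex1[OF t] by blast
qed

lemma phi_bij: "bij_betw phi PP H'"
proof (rule bij_betw_imageI)
  show "inj_on phi PP"
  proof
    fix t1 t2 assume "t1 \<in> PP" "t2 \<in> PP" "phi t1 = phi t2"
    then show "t1 = t2" using phi_PP vec3_eq_iff by metis
  qed
  show "phi ` PP = H'"
  proof
    show "phi ` PP \<subseteq> H'" using phi_PP by auto
    show "H' \<subseteq> phi ` PP" using phi_val H'_val_PP by (metis image_eqI subsetI)
  qed
qed

lemma H'_mul: "M1 \<in> H' \<Longrightarrow> M2 \<in> H' \<Longrightarrow> M1 ** M2 \<in> H'"
  unfolding H'_MW using MW_app wmat_append by (auto simp: wmat_append[symmetric])

lemma mat1_H': "mat 1 \<in> H'" unfolding H'_def by simp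

lemma wmat_inj_MW: "inj_on wmat MW" using wmat_inj by (auto intro: inj_onI)


(* ---- G1 ---- *)


definition nsq :: "real\<times>real \<Rightarrow> real" where "nsq x = fst x ^ 2 + snd x ^ 2"
definition det2 :: "real\<times>real \<Rightarrow> real\<times>real \<Rightarrow> real" where "det2 x y = fst x * snd y - snd x * fst y"

lemma norm_nsq: "norm x = sqrt (nsq x)"
  by (cases x) (simp add: norm_Pair nsq_def)

lemma norm_sq: "(norm x)^2 = nsq x"
  by (simp add: norm_nsq nsq_def)

lemma inner_eq: "inner x y = fst x * fst y + snd x * snd y"
  by (cases x; cases y) simp

lemma nsq_ge0: "0 \<le> nsq x" by (simp add: nsq_def)

lemma nsq_0: "nsq x = 0 \<longleftrightarrow> x = 0"
  by (cases x) (simp add: nsq_def zero_prod_def)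

lemma span_sing: "span {x::real\<times>real} = range (\<lambda>k. k *\<^sub>R x)"
  by (rule span_singleton)

lemma indep_det: "(independent {u, v::real\<times>real} \<and> u \<noteq> v) \<longleftrightarrow> det2 u v \<noteq> 0"
proof
  assume h: "independent {u, v} \<and> u \<noteq> v"
  then have v0: "v \<noteq> 0" and un: "u \<notin> span {v}" using independent_insert[of u "{v}"] by auto
  show "det2 u v \<noteq> 0"
  proof
    assume d: "det2 u v = 0"
    have "u = (inner u v / nsq v) *\<^sub>R v"
    proof -
      have nv: "nsq v \<noteq> 0" using v0 nsq_0 by auto
      obtain u1 u2 v1 v2 where uv: "u = (u1,u2)" "v = (v1,v2)" by (cases u; cases v)
      have "u1 * v2 = u2 * v1" using d uv by (simp add: det2_def)
      then show ?thesis using nv uv unfolding nsq_def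
        by (simp add: field_simps power2_eq_square)
    qed
    then have "u \<in> span {v}" using span_sing by auto
    then show False using un by simp
  qed
next
  assume d: "det2 u v \<noteq> 0"
  then have uv: "u \<noteq> v" by (auto simp: det2_def)
  have v0: "v \<noteq> 0" using d by (auto simp: det2_def)
  have "u \<notin> span {v}"
  proof
    assume "u \<in> span {v}"
    then obtain k where "u = k *\<^sub>R v" using span_sing by auto
    then have "det2 u v = 0" by (simp add: det2_def)
    then show False using d by simp
  qed
  then show "independent {u, v} \<and> u \<noteq> v"
    using independent_insert[of u "{v}"] v0 uv by auto
qed

lemma lagrange: "nsq w * (det2 u v)^2 = nsq v * (inner w u)^2 - 2*(inner u v)*(inner w u)*(inner w v) + nsq u * (inner w v)^2"
  by (simp add: nsq_def det2_def inner_eq power2_eq_square algebra_simps)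

lemma lagrange2: "nsq u * nsq v = (inner u v)^2 + (det2 u v)^2"
  by (simp add: nsq_def det2_def inner_eq power2_eq_square algebra_simps)

lemma nsq_diff: "nsq (x - y) = nsq x + nsq y - 2 * inner x y"
  by (simp add: nsq_def inner_eq power2_eq_square algebra_simps)
lemma nsq_add: "nsq (x + y) = nsq x + nsq y + 2 * inner x y"
  by (simp add: nsq_def inner_eq power2_eq_square algebra_simps)
lemma nsq_minus: "nsq (- x) = nsq x"
  by (simp add: nsq_def)

lemma K_arith: fixes m c a b :: real
  assumes "0 \<le> c" "2*c < m" "4*a^2 \<le> m^2" "4*b^2 \<le> m^2" "-4*(a*b) \<le> m^2"
    "m*(m^2 - c^2) = m*a^2 - 2*c*a*b + m*b^2"
  shows False
proof -
  have m: "m > 0" using assms by linarith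
  have 1: "m*(4*a^2) \<le> m*m^2" using assms(3) m by (intro mult_left_mono) auto
  have 2: "m*(4*b^2) \<le> m*m^2" using assms(4) m by (intro mult_left_mono) auto
  have 3: "(2*c)*(-4*(a*b)) \<le> (2*c)*m^2" using assms(5,1) by (intro mult_left_mono) auto
  have 4: "0 < m*((m-2*c)*(m+c))" using m assms(1,2) by (intro mult_pos_pos) auto
  have e1: "m*((m-2*c)*(m+c)) = m*m^2 - c*m^2 - 2*m*c^2" by (simp add: power2_eq_square algebra_simps)
  have e2: "4*(m*(m^2 - c^2)) = m*(4*a^2) + (2*c)*(-4*(a*b)) + m*(4*b^2)"
    using assms(6) by (simp add: algebra_simps)
  have e3: "4*(m*(m^2 - c^2)) = 4*(m*m^2) - 4*(m*c^2)" by (simp add: algebra_simps)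
  show False using 1 2 3 4 e1 e2 e3 by (simp add: algebra_simps)
qed

lemma frl_obtain: assumes "full_rank_lattice L"
  obtains u v where "independent {u, v}" "u \<noteq> v"
     "L = {of_int m *\<^sub>R u + of_int n *\<^sub>R v | m n. True}"
  using assms unfolding full_rank_lattice_def by blast

lemma frl_mem: assumes "L = {of_int m *\<^sub>R u + of_int n *\<^sub>R v | m n. True}" "x \<in> L"
  obtains m1 n1 where "x = of_int m1 *\<^sub>R u + of_int n1 *\<^sub>R v"
proof -
  have "\<exists>m1 n1. x = of_int m1 *\<^sub>R u + of_int n1 *\<^sub>R v" using assms by simp
  then show ?thesis using that by blast
qed

lemma frl_memI: assumes "L = {of_int m *\<^sub>R u + of_int n *\<^sub>R v | m n. True}" "x = of_int m1 *\<^sub>R u + of_int n1 *\<^sub>R v"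
  shows "x \<in> L" using assms by blast

lemma frl_diff: assumes "full_rank_lattice L" "x \<in> L" "y \<in> L" shows "x - y \<in> L"
proof -
  obtain u v where "independent {u, v}" "u \<noteq> v" and L: "L = {of_int m *\<^sub>R u + of_int n *\<^sub>R v | m n. True}"
    by (rule frl_obtain[OF assms(1)])
  obtain m1 n1 where x: "x = of_int m1 *\<^sub>R u + of_int n1 *\<^sub>R v" using frl_mem[OF L assms(2)] .
  obtain m2 n2 where y: "y = of_int m2 *\<^sub>R u + of_int n2 *\<^sub>R v" using frl_mem[OF L assms(3)] .
  have "x - y = of_int (m1 - m2) *\<^sub>R u + of_int (n1 - n2) *\<^sub>R v" unfolding x y by (simp add: algebra_simps)
  then show ?thesis by (rule frl_memI[OF L])
qed

lemma frl_add: assumes "full_rank_lattice L" "x \<in> L" "y \<in> L" shows "x + y \<in> L"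
proof -
  obtain u v where "independent {u, v}" "u \<noteq> v" and L: "L = {of_int m *\<^sub>R u + of_int n *\<^sub>R v | m n. True}"
    by (rule frl_obtain[OF assms(1)])
  obtain m1 n1 where x: "x = of_int m1 *\<^sub>R u + of_int n1 *\<^sub>R v" using frl_mem[OF L assms(2)] .
  obtain m2 n2 where y: "y = of_int m2 *\<^sub>R u + of_int n2 *\<^sub>R v" using frl_mem[OF L assms(3)] .
  have "x + y = of_int (m1 + m2) *\<^sub>R u + of_int (n1 + n2) *\<^sub>R v" unfolding x y by (simp add: algebra_simps)
  then show ?thesis by (rule frl_memI[OF L])
qed

lemma frl_zero: assumes "full_rank_lattice L" shows "0 \<in> L"
proof -
  obtain u v where "independent {u, v}" "u \<noteq> v" and L: "L = {of_int m *\<^sub>R u + of_int n *\<^sub>R v | m n. True}"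
    by (rule frl_obtain[OF assms(1)])
  have "(0::real\<times>real) = of_int 0 *\<^sub>R u + of_int 0 *\<^sub>R v" by simp
  then show ?thesis by (rule frl_memI[OF L])
qed

lemma frl_neg: assumes "full_rank_lattice L" "x \<in> L" shows "- x \<in> L"
  using frl_diff[OF assms(1) frl_zero[OF assms(1)] assms(2)] by simp

lemma frl_nonzero: assumes "full_rank_lattice L" shows "\<exists>x\<in>L. x \<noteq> 0"
proof -
  obtain u v where i: "independent {u, v}" "u \<noteq> v" and L: "L = {of_int m *\<^sub>R u + of_int n *\<^sub>R v | m n. True}"
    by (rule frl_obtain[OF assms(1)])
  have "u \<noteq> 0" using i(1) dependent_zero by blast
  moreover have "u = of_int 1 *\<^sub>R u + of_int 0 *\<^sub>R v" by simp
  then have "u \<in> L" by (rule frl_memI[OF L])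
  ultimately show ?thesis by blast
qed

lemma Z2_ints: "x \<in> {(of_int a, of_int b) | a b. True} \<Longrightarrow> fst x \<in> \<int> \<and> snd x \<in> \<int>"
  by auto

lemma int_nsq_ge1: assumes "fst x \<in> \<int>" "snd x \<in> \<int>" "x \<noteq> 0" shows "nsq x \<ge> 1"
proof -
  obtain a b where x: "x = (a,b)" by (cases x)
  have "a \<noteq> 0 \<or> b \<noteq> 0" using assms(3) x by (auto simp: zero_prod_def)
  then show ?thesis
  proof
    assume "a \<noteq> 0"
    then have "\<bar>a\<bar> \<ge> 1" using assms(1) x Ints_nonzero_abs_ge1 by auto
    then have "a^2 \<ge> 1" using abs_le_square_iff[of 1 a] by simp
    then show ?thesis using x by (simp add: nsq_def add_increasing2 add_increasing)
  next
    assume "b \<noteq> 0"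
    then have "\<bar>b\<bar> \<ge> 1" using assms(2) x Ints_nonzero_abs_ge1 by auto
    then have "b^2 \<ge> 1" using abs_le_square_iff[of 1 b] by simp
    then show ?thesis using x by (simp add: nsq_def add_increasing2 add_increasing)
  qed
qed

lemma norm_ge1_int: "fst (x::real\<times>real) \<in> \<int> \<Longrightarrow> snd x \<in> \<int> \<Longrightarrow> x \<noteq> 0 \<Longrightarrow> norm x \<ge> 1"
  using int_nsq_ge1[of x] by (simp add: norm_nsq)

lemma WR_Z2_D: "L \<in> WR_Z2 \<Longrightarrow> full_rank_lattice L \<and> well_rounded L \<and> (\<forall>x\<in>L. fst x \<in> \<int> \<and> snd x \<in> \<int>)"
  unfolding WR_Z2_def by auto

lemma lmin_props: assumes "full_rank_lattice L" "\<forall>x\<in>L. fst x \<in> \<int> \<and> snd x \<in> \<int>"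
  shows "lattice_min L \<ge> 1" "\<And>x. x \<in> L \<Longrightarrow> x \<noteq> 0 \<Longrightarrow> norm x \<ge> lattice_min L"
proof -
  let ?S = "{norm x | x. x \<in> L \<and> x \<noteq> 0}"
  have ne: "?S \<noteq> {}" using frl_nonzero[OF assms(1)] by auto
  have bd: "bdd_below ?S" by (rule bdd_belowI[of _ 0]) auto
  show "lattice_min L \<ge> 1" unfolding lattice_min_def
    using ne assms(2) norm_ge1_int by (intro cInf_greatest) auto
  fix x assume "x \<in> L" "x \<noteq> 0"
  then have mem: "norm x \<in> ?S" by blast
  show "norm x \<ge> lattice_min L" unfolding lattice_min_def using cInf_lower[OF mem bd] .
qed

lemma det0_mult: assumes "det2 u v = 0" "u \<noteq> 0" shows "v = (inner v u / nsq u) *\<^sub>R u"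
proof -
  have nu: "nsq u \<noteq> 0" using assms(2) nsq_0 by auto
  obtain u1 u2 v1 v2 where uv: "u = (u1,u2)" "v = (v1,v2)" by (cases u; cases v)
  have "u1 * v2 = u2 * v1" using assms(1) uv by (simp add: det2_def)
  then show ?thesis using nu uv unfolding nsq_def
    by (simp add: field_simps power2_eq_square)
qed

lemma Ints_nsq: "fst x \<in> \<int> \<Longrightarrow> snd x \<in> \<int> \<Longrightarrow> nsq x \<in> \<int>"
  by (simp add: nsq_def)
lemma Ints_det2: "fst x \<in> \<int> \<Longrightarrow> snd x \<in> \<int> \<Longrightarrow> fst y \<in> \<int> \<Longrightarrow> snd y \<in> \<int> \<Longrightarrow> det2 x y \<in> \<int>"
  by (simp add: det2_def)

locale wrz =
  fixes L assumes WR: "L \<in> WR_Z2"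
begin

definition "m = (lattice_min L)^2"

lemma frl: "full_rank_lattice L" using WR_Z2_D[OF WR] by blast
lemma ints: "x \<in> L \<Longrightarrow> fst x \<in> \<int> \<and> snd x \<in> \<int>" using WR_Z2_D[OF WR] by blast
lemma lmin1: "lattice_min L \<ge> 1" using lmin_props(1)[OF frl] ints by blast
lemma m1: "m \<ge> 1" unfolding m_def using lmin1 by (simp add: one_le_power)

lemma nz_ge: assumes "x \<in> L" "x \<noteq> 0" shows "nsq x \<ge> m"
proof -
  have "norm x \<ge> lattice_min L" using lmin_props(2)[OF frl] ints assms by blast
  then have "(lattice_min L)^2 \<le> (norm x)^2" using lmin1 by (intro power_mono) auto
  then show ?thesis unfolding m_def norm_sq .
qed

lemma mv: assumes "x \<in> min_vectors L" shows "x \<in> L" "nsq x = m" "x \<noteq> 0" "norm x = lattice_min L"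
proof -
  show "x \<in> L" "norm x = lattice_min L" using assms unfolding min_vectors_def by auto
  then show "nsq x = m" unfolding m_def using norm_sq by metis
  then show "x \<noteq> 0" using m1 by (auto simp: nsq_def)
qed

lemma mv_neg: "x \<in> min_vectors L \<Longrightarrow> - x \<in> min_vectors L"
  using frl_neg[OF frl] unfolding min_vectors_def by auto

lemma WR_pair: "\<exists>u v. u \<in> min_vectors L \<and> v \<in> min_vectors L \<and> det2 u v \<noteq> 0 \<and> 0 \<le> inner u v"
proof -
  let ?S = "min_vectors L"
  have sp: "span ?S = UNIV" using WR_Z2_D[OF WR] unfolding well_rounded_def by blast
  have "?S \<noteq> {}"
  proof
    assume "?S = {}"
    then have "span ?S = {0}" by simp
    moreover have "(1::real, 0::real) \<in> span ?S" using sp by simp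
    ultimately show False by (simp add: zero_prod_def)
  qed
  then obtain u where u: "u \<in> ?S" by blast
  have u0: "u \<noteq> 0" using mv(3)[OF u] .
  have "\<exists>v\<in>?S. det2 u v \<noteq> 0"
  proof (rule ccontr)
    assume "\<not> (\<exists>v\<in>?S. det2 u v \<noteq> 0)"
    have "?S \<subseteq> span {u}"
    proof
      fix v assume "v \<in> ?S"
      then have "det2 u v = 0" using `\<not> (\<exists>v\<in>?S. det2 u v \<noteq> 0)` by blast
      then have "v = (inner v u / nsq u) *\<^sub>R u" using det0_mult[OF _ u0] by blast
      then show "v \<in> span {u}" unfolding span_sing by blast
    qed
    then have "span ?S \<subseteq> span {u}" using span_mono[of ?S "span {u}"] by (simp only: span_span)
    then have "(- snd u, fst u) \<in> span {u}" using sp by auto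
    then obtain k where k: "(- snd u, fst u) = k *\<^sub>R u" using span_sing by auto
    obtain u1 u2 where uu: "u = (u1, u2)" by (cases u)
    have e1: "- u2 = k * u1" and e2: "u1 = k * u2" using k uu by auto
    have "u1 * u1 + u2 * u2 = u1 * (k * u2) + u2 * u2" using e2 by simp
    also have "\<dots> = (k * u1) * u2 + u2 * u2" by (simp add: algebra_simps)
    also have "\<dots> = 0" using e1[symmetric] by simp
    finally have "u1 * u1 + u2 * u2 = 0" .
    then have "nsq u = 0" using uu by (simp add: nsq_def power2_eq_square)
    then show False using u0 nsq_0 by simp
  qed
  then obtain v where v: "v \<in> ?S" "det2 u v \<noteq> 0" by blast
  show ?thesis
  proof (cases "0 \<le> inner u v")
    case True then show ?thesis using u v by blast
  next
    case False
    have "- v \<in> ?S" using mv_neg v by blast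
    moreover have "det2 u (- v) \<noteq> 0" using v by (simp add: det2_def)
    moreover have "0 \<le> inner u (- v)" using False by simp
    ultimately show ?thesis using u by blast
  qed
qed

lemma ints_mv: "x \<in> min_vectors L \<Longrightarrow> fst x \<in> \<int> \<and> snd x \<in> \<int>"
  using ints mv(1) by blast

lemma two_c_lt: assumes u: "u \<in> min_vectors L" and v: "v \<in> min_vectors L"
  and d: "det2 u v \<noteq> 0" and c: "0 \<le> inner u v"
  shows "2 * inner u v < m"
proof -
  have "u - v \<in> L" using frl_diff[OF frl mv(1)[OF u] mv(1)[OF v]] .
  moreover have "u - v \<noteq> 0" using d by (auto simp: det2_def)
  ultimately have "nsq (u - v) \<ge> m" by (rule nz_ge)
  then have le: "2 * inner u v \<le> m" unfolding nsq_diff mv(2)[OF u] mv(2)[OF v] by simp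
  have "2 * inner u v \<noteq> m"
  proof
    assume e: "2 * inner u v = m"
    have h: "m * m = (inner u v)^2 + (det2 u v)^2" using lagrange2[of u v] mv(2)[OF u] mv(2)[OF v] by simp
    have "(2 * inner u v) * (2 * inner u v) = (inner u v)^2 + (det2 u v)^2" using h[folded e] .
    then have "(det2 u v)^2 = 3 * (inner u v)^2" by (simp add: power2_eq_square algebra_simps)
    then have "(2 * det2 u v)^2 = 3 * (2 * inner u v)^2" by (simp add: power2_eq_square algebra_simps)
    then have "(2 * det2 u v)^2 = 3 * m^2" unfolding e .
    moreover have "m \<in> \<int>" using Ints_nsq ints_mv[OF u] mv(2)[OF u] by metis
    moreover have "det2 u v \<in> \<int>" using Ints_det2 ints_mv[OF u] ints_mv[OF v] by blast
    ultimately obtain M D where MD: "m = of_int M" "det2 u v = of_int D" "(2 * of_int D)^2 = 3 * (of_int M :: real)^2"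
      by (elim Ints_cases) auto
    then have "(of_int ((2 * D)^2) :: real) = of_int (3 * M^2)" by simp
    then have "((2 * D)^2 :: int) = 3 * M^2" by (simp only: of_int_eq_iff)
    then have "M = 0" by (rule no_3sq)
    then show False using MD m1 by simp
  qed
  then show ?thesis using le by simp
qed

lemma classify: assumes u: "u \<in> min_vectors L" and v: "v \<in> min_vectors L"
  and d: "det2 u v \<noteq> 0" and c: "0 \<le> inner u v" and w: "w \<in> min_vectors L"
  shows "w = u \<or> w = - u \<or> w = v \<or> w = - v"
proof (rule ccontr)
  assume nw: "\<not> (w = u \<or> w = - u \<or> w = v \<or> w = - v)"
  have c2: "2 * inner u v < m" using two_c_lt[OF u v d c] .
  have wL: "w \<in> L" and uL: "u \<in> L" and vL: "v \<in> L" using mv(1) u v w by auto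
  have nu: "nsq u = m" and nv: "nsq v = m" and nw': "nsq w = m" using mv(2) u v w by auto
  have "nsq (w - u) \<ge> m" using nz_ge[OF frl_diff[OF frl wL uL]] nw by auto
  then have a1: "2 * inner w u \<le> m" unfolding nsq_diff nu nw' by simp
  have "nsq (w + u) \<ge> m" using nz_ge[OF frl_add[OF frl wL uL]] nw by (auto simp: add_eq_0_iff2)
  then have a2: "- (2 * inner w u) \<le> m" unfolding nsq_add nu nw' by simp
  have "nsq (w - v) \<ge> m" using nz_ge[OF frl_diff[OF frl wL vL]] nw by auto
  then have b1: "2 * inner w v \<le> m" unfolding nsq_diff nv nw' by simp
  have "nsq (w + v) \<ge> m" using nz_ge[OF frl_add[OF frl wL vL]] nw by (auto simp: add_eq_0_iff2)
  then have b2: "- (2 * inner w v) \<le> m" unfolding nsq_add nv nw' by simp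
  have aa: "\<bar>2 * inner w u\<bar> \<le> \<bar>m\<bar>" using a1 a2 m1 by linarith
  have bb: "\<bar>2 * inner w v\<bar> \<le> \<bar>m\<bar>" using b1 b2 m1 by linarith
  have "(2 * inner w u)^2 \<le> m^2" using aa abs_le_square_iff by blast
  then have A2: "4 * (inner w u)^2 \<le> m^2" by (simp add: power_mult_distrib)
  have "(2 * inner w v)^2 \<le> m^2" using bb abs_le_square_iff by blast
  then have B2: "4 * (inner w v)^2 \<le> m^2" by (simp add: power_mult_distrib)
  have "\<bar>2 * inner w u\<bar> * \<bar>2 * inner w v\<bar> \<le> \<bar>m\<bar> * \<bar>m\<bar>"
    using aa bb by (intro mult_mono) auto
  then have "\<bar>4 * (inner w u * inner w v)\<bar> \<le> m^2"
    by (simp add: abs_mult power2_eq_square)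
  moreover have "- (4 * (inner w u * inner w v)) \<le> \<bar>4 * (inner w u * inner w v)\<bar>" by (rule abs_ge_minus_self)
  ultimately have AB: "- 4 * (inner w u * inner w v) \<le> m^2" by linarith
  have "nsq w * (det2 u v)^2 = nsq v * (inner w u)^2 - 2*(inner u v)*(inner w u)*(inner w v) + nsq u * (inner w v)^2"
    by (rule lagrange)
  moreover have "(det2 u v)^2 = m^2 - (inner u v)^2" using lagrange2[of u v] nu nv by (simp add: power2_eq_square)
  ultimately have L: "m * (m^2 - (inner u v)^2) = m * (inner w u)^2 - 2 * inner u v * inner w u * inner w v + m * (inner w v)^2"
    using nu nv nw' by simp
  show False using K_arith[OF c c2 A2 B2 AB] L by (simp add: algebra_simps)
qed

lemma vec_angle_mv: "x \<in> min_vectors L \<Longrightarrow> y \<in> min_vectors L \<Longrightarrow> vec_angle x y = arccos (inner x y / m)"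
  unfolding vec_angle_def m_def using mv(4) by (simp add: power2_eq_square)

lemma theta: assumes u: "u \<in> min_vectors L" and v: "v \<in> min_vectors L"
  and d: "det2 u v \<noteq> 0" and c: "0 \<le> inner u v"
  shows "lattice_theta L = arccos (inner u v / m)"
proof -
  let ?c = "inner u v"
  have c2: "2 * ?c < m" using two_c_lt[OF u v d c] .
  have m0: "m > 0" using m1 by simp
  have c01: "0 \<le> ?c / m" "?c / m \<le> 1" using c c2 m0 by (auto simp: field_simps)
  show ?thesis unfolding lattice_theta_def
  proof (rule the_equality)
    show "\<exists>u'\<in>min_vectors L. \<exists>v'\<in>min_vectors L. independent {u', v'} \<and> u' \<noteq> v' \<and>
        arccos (?c / m) = vec_angle u' v' \<and> arccos (?c / m) \<le> pi / 2"
    proof (intro bexI conjI)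
      show "independent {u, v}" "u \<noteq> v" using indep_det[of u v] d by auto
      show "arccos (?c / m) = vec_angle u v" using vec_angle_mv[OF u v] by simp
      show "arccos (?c / m) \<le> pi / 2" using arccos_le_pi2[OF c01] .
    qed (auto simp: u v)
  next
    fix t assume "\<exists>u'\<in>min_vectors L. \<exists>v'\<in>min_vectors L. independent {u', v'} \<and> u' \<noteq> v' \<and>
        t = vec_angle u' v' \<and> t \<le> pi / 2"
    then obtain u' v' where u': "u' \<in> min_vectors L" and v': "v' \<in> min_vectors L"
      and i: "independent {u', v'} \<and> u' \<noteq> v'" and t: "t = vec_angle u' v'" "t \<le> pi / 2" by blast
    have d': "det2 u' v' \<noteq> 0" using i indep_det by blast
    have cu: "u' = u \<or> u' = - u \<or> u' = v \<or> u' = - v" using classify[OF u v d c u'] .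
    have cv: "v' = u \<or> v' = - u \<or> v' = v \<or> v' = - v" using classify[OF u v d c v'] .
    have dz: "\<And>x. det2 x x = 0" "\<And>x. det2 x (- x) = 0" "\<And>x. det2 (- x) x = 0" "\<And>x. det2 (- x) (- x) = 0"
      by (simp_all add: det2_def algebra_simps)
    have ic: "inner u' v' = ?c \<or> inner u' v' = - ?c"
      using cu cv d' dz by (elim disjE) (simp_all add: inner_commute)
    have t': "t = arccos (inner u' v' / m)" using t(1) vec_angle_mv[OF u' v'] by simp
    show "t = arccos (?c / m)"
      using ic
    proof
      assume "inner u' v' = ?c" then show ?thesis using t' by simp
    next
      assume e: "inner u' v' = - ?c"
      have b: "-1 \<le> - ?c / m" "- ?c / m \<le> 1" using c01 by auto
      have "cos t = - ?c / m" using t' e b by simp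
      moreover have "0 \<le> t" using t' e arccos_lbound[OF b] by simp
      ultimately have "0 \<le> - ?c / m" using t(2) cos_ge_zero[of t] by simp
      then have "?c / m \<le> 0" by simp
      then have "?c \<le> 0" using m0 by (simp add: divide_le_0_iff)
      then have "?c = 0" using c by simp
      then show ?thesis using t' e by simp
    qed
  qed
qed

lemma theta_range: "\<exists>x. 0 \<le> x \<and> 2 * x < 1 \<and> lattice_theta L = arccos x"
proof -
  obtain u v where uv: "u \<in> min_vectors L" "v \<in> min_vectors L" "det2 u v \<noteq> 0" "0 \<le> inner u v"
    using WR_pair by blast
  have "2 * inner u v < m" using two_c_lt uv by blast
  moreover have "m > 0" using m1 by simp
  ultimately show ?thesis using theta[OF uv] uv(4)
    by (intro exI[of _ "inner u v / m"]) (auto simp: field_simps)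
qed

end


(* ---- G2 ---- *)


lemma S_facts: assumes "(p,q) \<in> S_pairs"
  shows "0 < p \<and> 0 < q \<and> coprime p q \<and> (\<exists>r::nat. p^2 + r^2 = q^2 \<and> 2*r < q \<and> r < p)"
proof (cases "(p,q) = (1,1)")
  case True then show ?thesis by (intro conjI exI[of _ 0]) auto
next
  case False
  then have h: "0 < p" "0 < q" "coprime p q" "sqrt 3 / 2 < real p / real q" "real p / real q < 1"
    and "\<exists>r::nat. q^2 - p^2 = r^2" using assms unfolding S_pairs_def by auto
  then obtain r :: nat where r: "q^2 - p^2 = r^2" by blast
  have "p < q" using h(2,5) by (simp add: divide_less_eq)
  then have "p^2 < q^2" by (simp add: power_strict_mono)
  then have pr: "p^2 + r^2 = q^2" using r by simp
  have "sqrt 3 * real q < 2 * real p" using h(2,4) by (simp add: field_simps)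
  then have "(sqrt 3 * real q)^2 < (2 * real p)^2" by (intro power_strict_mono) auto
  then have "real (3 * q^2) < real (4 * p^2)" by (simp add: power_mult_distrib)
  then have s: "3 * q^2 < 4 * p^2" by (simp only: of_nat_less_iff)
  have "(2*r)^2 < q^2" using s pr by (simp add: power_mult_distrib)
  then have "2 * r < q" by (rule power_less_imp_less_base) simp
  moreover have "r^2 < p^2" using s pr by linarith
  then have "r < p" by (rule power_less_imp_less_base) simp
  ultimately show ?thesis using h pr by blast
qed

lemma coprime_eq: fixes p q p' q' :: nat
  assumes "coprime p q" "coprime p' q'" "p * q' = p' * q" "0 < q" "0 < q'"
  shows "p = p' \<and> q = q'"
proof -
  have "q dvd p * q'" using assms(3) by simp
  then have "q dvd q'" using assms(1) by (simp add: coprime_dvd_mult_right_iff coprime_commute)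
  have "q' dvd p' * q" using assms(3) by (metis dvd_triv_right)
  then have "q' dvd q" using assms(2) by (simp add: coprime_dvd_mult_right_iff coprime_commute)
  have "q = q'" using `q dvd q'` `q' dvd q` by (rule dvd_antisym)
  then show ?thesis using assms(3,4) by simp
qed

lemma quad_int: fixes q r i j :: int
  assumes "0 < q" "0 \<le> r" "2*r \<le> q" "i \<noteq> 0 \<or> j \<noteq> 0"
  shows "q^2 \<le> q^2*(i^2+j^2) + 2*(i*j)*q*r"
proof (cases "0 \<le> i*j")
  case True
  have "1 \<le> i^2 + j^2" using assms(4)
  proof
    assume "i \<noteq> 0" then have "1 \<le> \<bar>i\<bar>" by arith
    then have "1 \<le> i^2" using abs_le_square_iff[of 1 i] by simp
    then show ?thesis by (simp add: add_increasing2)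
  next
    assume "j \<noteq> 0" then have "1 \<le> \<bar>j\<bar>" by arith
    then have "1 \<le> j^2" using abs_le_square_iff[of 1 j] by simp
    then show ?thesis by (simp add: add_increasing)
  qed
  then have "q^2 * 1 \<le> q^2 * (i^2+j^2)" by (intro mult_left_mono) auto
  moreover have "0 \<le> 2*(i*j)*q*r" using True assms by simp
  ultimately show ?thesis by simp
next
  case False
  then have ij: "i*j < 0" by simp
  have "(i*j)*q \<le> (i*j)*(2*r)" using ij assms(3) by (intro mult_left_mono_neg) auto
  then have "(i*j)*q*q \<le> (i*j)*(2*r)*q" using assms(1) by (intro mult_right_mono) auto
  then have 1: "q^2*(i*j) \<le> 2*(i*j)*q*r" by (simp add: power2_eq_square algebra_simps)
  have "0 \<le> (i+j)^2" by simp
  then have "1 \<le> i^2 + j^2 + i*j" using ij by (simp add: power2_eq_square algebra_simps)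
  then have "q^2 * 1 \<le> q^2 * (i^2 + j^2 + i*j)" by (intro mult_left_mono) auto
  then show ?thesis using 1 by (simp add: algebra_simps)
qed

locale pqr =
  fixes p q r :: nat
  assumes p0: "0 < p" and q0: "0 < q" and pr: "p^2 + r^2 = q^2" and rq: "2*r < q"
begin

definition "u0 = (real q, 0::real)"
definition "v0 = (real r, real p)"
definition "LL = {of_int i *\<^sub>R u0 + of_int j *\<^sub>R v0 | i j. True}"

lemma pr_real: "real p ^ 2 + real r ^ 2 = real q ^ 2"
  using pr by (metis of_nat_add of_nat_power)

lemma det_uv: "det2 u0 v0 \<noteq> 0" using p0 q0 by (simp add: det2_def u0_def v0_def)

lemma frl: "full_rank_lattice LL"
  unfolding full_rank_lattice_def LL_def using det_uv indep_det by blast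

lemma mem_LL: "x \<in> LL \<longleftrightarrow> (\<exists>i j. x = (of_int (i * int q + j * int r), of_int (j * int p)))"
proof -
  have "\<And>i j. of_int i *\<^sub>R u0 + of_int j *\<^sub>R v0 = (of_int (i * int q + j * int r), of_int (j * int p))"
    by (simp add: u0_def v0_def)
  then show ?thesis unfolding LL_def by auto
qed

lemma Z2: "LL \<subseteq> {(of_int a, of_int b) | a b. True}"
  using mem_LL by blast

lemma nsq_ge: assumes "x \<in> LL" "x \<noteq> 0" shows "nsq x \<ge> (real q)^2"
proof -
  obtain i j where x: "x = (of_int (i * int q + j * int r), of_int (j * int p))" using assms(1) mem_LL by blast
  have ij: "i \<noteq> 0 \<or> j \<noteq> 0" using assms(2) x by (auto simp: zero_prod_def)
  have pr': "int p ^ 2 + int r ^ 2 = int q ^ 2" using pr by (metis of_nat_add of_nat_power)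
  have "nsq x = of_int ((i * int q + j * int r)^2 + (j * int p)^2)" using x by (simp add: nsq_def)
  also have "(i * int q + j * int r)^2 + (j * int p)^2 = (int q)^2*(i^2+j^2) + 2*(i*j)*int q*int r"
    using pr' by (simp add: power2_eq_square algebra_simps) (metis (no_types, lifting) distrib_left mult.commute mult.left_commute)
  finally have "nsq x = of_int ((int q)^2*(i^2+j^2) + 2*(i*j)*int q*int r)" .
  moreover have "(int q)^2 \<le> (int q)^2*(i^2+j^2) + 2*(i*j)*int q*int r"
    using quad_int[of "int q" "int r" i j] q0 rq ij by simp
  ultimately show ?thesis by (metis of_int_le_iff of_int_of_nat_eq of_int_power)
qed

lemma u0_in: "u0 \<in> LL" by (rule frl_memI[OF LL_def, of _ 1 0]) simp
lemma v0_in: "v0 \<in> LL" by (rule frl_memI[OF LL_def, of _ 0 1]) simp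
lemma nsq_u0: "nsq u0 = (real q)^2" by (simp add: nsq_def u0_def)
lemma nsq_v0: "nsq v0 = (real q)^2" using pr_real by (simp add: nsq_def v0_def)

lemma norm_ge: "x \<in> LL \<Longrightarrow> x \<noteq> 0 \<Longrightarrow> norm x \<ge> real q"
  using nsq_ge unfolding norm_nsq by (metis of_nat_0_le_iff real_le_rsqrt)

lemma norm_u0: "norm u0 = real q" using nsq_u0 by (simp add: norm_nsq)
lemma norm_v0: "norm v0 = real q" using nsq_v0 by (simp add: norm_nsq)

lemma lmin: "lattice_min LL = real q"
  unfolding lattice_min_def
proof (rule cInf_eq_minimum)
  have "u0 \<noteq> 0" using q0 by (simp add: u0_def zero_prod_def)
  then have "norm u0 \<in> {norm x |x. x \<in> LL \<and> x \<noteq> 0}" using u0_in by blast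
  then show "real q \<in> {norm x |x. x \<in> LL \<and> x \<noteq> 0}" using norm_u0 by simp
next
  fix y assume "y \<in> {norm x |x. x \<in> LL \<and> x \<noteq> 0}"
  then obtain x where "y = norm x" "x \<in> LL" "x \<noteq> 0" by blast
  then show "real q \<le> y" using norm_ge by simp
qed

lemma mv_u0: "u0 \<in> min_vectors LL" unfolding min_vectors_def using u0_in norm_u0 lmin by simp
lemma mv_v0: "v0 \<in> min_vectors LL" unfolding min_vectors_def using v0_in norm_v0 lmin by simp

lemma span_uv: "span {u0, v0} = UNIV"
proof -
  have "z \<in> span {u0, v0}" for z
  proof -
    obtain z1 z2 where z: "z = (z1, z2)" by (cases z)
    define b where "b = z2 / real p"
    define a where "a = (z1 - b * real r) / real q"
    have "z = a *\<^sub>R u0 + b *\<^sub>R v0" using p0 q0 z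
      by (simp add: a_def b_def u0_def v0_def field_simps)
    moreover have "a *\<^sub>R u0 + b *\<^sub>R v0 \<in> span {u0, v0}"
      by (intro span_add span_scale span_base) auto
    ultimately show ?thesis by simp
  qed
  then show ?thesis by auto
qed

lemma WR: "LL \<in> WR_Z2"
proof -
  have "span {u0, v0} \<subseteq> span (min_vectors LL)" using mv_u0 mv_v0 by (intro span_mono) auto
  then have "well_rounded LL" unfolding well_rounded_def using span_uv by auto
  then show ?thesis unfolding WR_Z2_def using frl Z2 by blast
qed

lemma sin_theta: "sin (lattice_theta LL) = real p / real q"
proof -
  interpret w: wrz LL by (unfold_locales) (rule WR)
  have m: "w.m = (real q)^2" unfolding w.m_def lmin ..
  have c: "0 \<le> inner u0 v0" by (simp add: u0_def v0_def)
  have "lattice_theta LL = arccos (inner u0 v0 / w.m)" using w.theta[OF mv_u0 mv_v0 det_uv c] .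
  also have "inner u0 v0 / w.m = real r / real q" unfolding m using q0 by (simp add: u0_def v0_def power2_eq_square)
  finally have t: "lattice_theta LL = arccos (real r / real q)" .
  have b: "-1 \<le> real r / real q" "real r / real q \<le> 1" using rq q0 by (auto simp: field_simps)
  have "sin (lattice_theta LL) = sqrt (1 - (real r / real q)^2)" unfolding t using sin_arccos[OF b] .
  also have "1 - (real r / real q)^2 = (real p / real q)^2"
    using pr_real q0 by (simp add: field_simps power2_eq_square)
  finally show ?thesis by simp
qed

lemma in_Cls: "LL \<in> Cls p q" unfolding Cls_def using WR sin_theta by blast

end


(* ---- G3 ---- *)


definition trip :: "nat \<Rightarrow> nat \<Rightarrow> int \<times> int \<times> int" where
  "trip p q = (if even p then (floor (sqrt (real q ^ 2 - real p ^ 2)), int p, int q)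
           else (int p, floor (sqrt (real q ^ 2 - real p ^ 2)), int q))"

lemma trip_eq: assumes "p^2 + r^2 = q^2"
  shows "trip p q = (if even p then (int r, int p, int q) else (int p, int r, int q))"
proof -
  have "real p ^ 2 + real r ^ 2 = real q ^ 2" using assms by (metis of_nat_add of_nat_power)
  then have "real q ^ 2 - real p ^ 2 = real r ^ 2" by simp
  then have "floor (sqrt (real q ^ 2 - real p ^ 2)) = int r" by simp
  then show ?thesis unfolding trip_def by simp
qed

lemma Cls_ne: "(p,q) \<in> S_pairs \<Longrightarrow> Cls p q \<noteq> {}"
proof -
  assume "(p,q) \<in> S_pairs"
  then obtain r where "0 < p" "0 < q" "p^2 + r^2 = q^2" "2*r < q" using S_facts by blast
  then interpret pqr p q r by unfold_locales
  show ?thesis using in_Cls by blast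
qed

lemma Cls_inj: assumes "(p,q) \<in> S_pairs" "(p',q') \<in> S_pairs" "Cls p q = Cls p' q'"
  shows "p = p' \<and> q = q'"
proof -
  obtain L where "L \<in> Cls p q" using Cls_ne[OF assms(1)] by blast
  then have "L \<in> Cls p' q'" using assms(3) by simp
  then have "real p / real q = real p' / real q'" using `L \<in> Cls p q` unfolding Cls_def by simp
  moreover have "0 < q" "0 < q'" "coprime p q" "coprime p' q'" using S_facts assms(1,2) by blast+
  ultimately have "real (p * q') = real (p' * q)" by (simp add: field_simps)
  then have "p * q' = p' * q" by (simp only: of_nat_eq_iff)
  then show ?thesis using coprime_eq `0 < q` `0 < q'` `coprime p q` `coprime p' q'` by blast
qed

lemma psi_Cls: "(p,q) \<in> S_pairs \<Longrightarrow> psi (Cls p q) = trip p q"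
  unfolding psi_def trip_def[symmetric]
proof (rule the_equality)
  assume "(p,q) \<in> S_pairs"
  then show "\<exists>p' q'. (p', q') \<in> S_pairs \<and> Cls p q = Cls p' q' \<and> trip p q = trip p' q'" by blast
next
  fix t assume s: "(p,q) \<in> S_pairs" and "\<exists>p' q'. (p', q') \<in> S_pairs \<and> Cls p q = Cls p' q' \<and> t = trip p' q'"
  then obtain p' q' where "(p', q') \<in> S_pairs" "Cls p q = Cls p' q'" "t = trip p' q'" by blast
  then show "t = trip p q" using Cls_inj[OF s] by metis
qed

lemma odd_odd_sq: fixes p r q :: nat assumes "odd p" "odd r" "p^2 + r^2 = q^2" shows False
proof -
  obtain a where a: "p = 2*a+1" using assms(1) oddE by blast
  obtain b where b: "r = 2*b+1" using assms(2) oddE by blast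
  have e: "q^2 = 4*(a^2+a+b^2+b) + 2" using assms(3) a b by (simp add: power2_eq_square algebra_simps)
  then have "even (q^2)" by simp
  then have "even q" by simp
  then obtain c where "q = 2*c" by blast
  then have "4*(c^2) = 4*(a^2+a+b^2+b) + 2" using e by (simp add: power2_eq_square algebra_simps)
  then have "\<exists>C Y::nat. 4*C = 4*Y + 2" by blast
  then show False by presburger
qed

lemma coprime_int_nat: "coprime (int a) (int b) = coprime a b"
  by (simp add: coprime_int_iff)

lemma trip_PP: assumes s: "(p,q) \<in> S_pairs" shows "trip p q \<in> PP"
proof -
  obtain r where h: "0 < p" "0 < q" "coprime p q" "p^2 + r^2 = q^2" "2*r < q" "r < p"
    using S_facts[OF s] by blast
  have ci: "gcd (int p) (int q) = 1" using h(3) coprime_int_nat by (simp add: coprime_iff_gcd_eq_1)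
  have pri: "int p ^ 2 + int r ^ 2 = int q ^ 2" using h(4) by (metis of_nat_add of_nat_power)
  show ?thesis
  proof (cases "even p")
    case True
    have r0: "r \<noteq> 0"
    proof
      assume "r = 0"
      then have "p = q" using h(4) by simp
      then have "p = 1" using h(3) by simp
      then show False using True by simp
    qed
    have "trip p q = (int r, int p, int q)" using trip_eq[OF h(4)] True by simp
    moreover have "(int r, int p, int q) \<in> PPT"
      unfolding PPT_def using h r0 True pri ci by (auto simp: add.commute)
    moreover have "2 * min (int r) (int p) < int q" using h(5) by linarith
    ultimately show ?thesis unfolding PP_def by auto
  next
    case False
    have te: "trip p q = (int p, int r, int q)" using trip_eq[OF h(4)] False by simp
    show ?thesis
    proof (cases "r = 0")
      case True
      then have "p = q" using h(4) by simp
      then have "p = 1" "q = 1" using h(3) by simp_all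
      then show ?thesis using te True unfolding PP_def by simp
    next
      case r0: False
      have "even r" using odd_odd_sq[OF False _ h(4)] by blast
      then have ev: "even (int r)" by simp
      have g: "gcd (int p) (gcd (int r) (int q)) = 1"
      proof -
        have "gcd (int p) (gcd (int r) (int q)) = gcd (int r) (gcd (int p) (int q))" by (rule gcd.left_commute)
        also have "\<dots> = 1" unfolding ci by simp
        finally show ?thesis .
      qed
      have "(int p, int r, int q) \<in> PPT"
        unfolding PPT_def using h r0 ev pri g by auto
      moreover have "2 * min (int p) (int r) < int q" using h(5) by linarith
      ultimately show ?thesis unfolding PP_def te by auto
    qed
  qed
qed

lemma trip_max: assumes s: "(p,q) \<in> S_pairs"
  shows "snd (snd (trip p q)) = int q \<and> max (fst (trip p q)) (fst (snd (trip p q))) = int p"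
proof -
  obtain r where h: "p^2 + r^2 = q^2" "r < p" using S_facts[OF s] by blast
  show ?thesis using trip_eq[OF h(1)] h(2) by auto
qed

lemma trip_inj: "(p,q) \<in> S_pairs \<Longrightarrow> (p',q') \<in> S_pairs \<Longrightarrow> trip p q = trip p' q' \<Longrightarrow> p = p' \<and> q = q'"
  using trip_max by (metis of_nat_eq_iff)

lemma S_intro: fixes p q r :: nat
  assumes "0 < r" "p^2 + r^2 = q^2" "2*r < q" "coprime p q" "0 < p"
  shows "(p,q) \<in> S_pairs"
proof -
  have q0: "0 < q" using assms(3) by simp
  have "0 < r^2" using assms(1) by simp
  then have "p^2 < q^2" using assms(2) by linarith
  then have "p < q" by (rule power_less_imp_less_base) simp
  then have lt1: "real p / real q < 1" using q0 by simp
  have "(2*r)^2 < q^2" using assms(3) by (intro power_strict_mono) auto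
  then have "4 * r^2 < q^2" by (simp add: power_mult_distrib)
  then have "3 * q^2 < 4 * p^2" using assms(2) by linarith
  then have "real (3 * q^2) < real (4 * p^2)" by (simp only: of_nat_less_iff)
  then have "(sqrt 3 * real q)^2 < (2 * real p)^2" by (simp add: power_mult_distrib)
  then have "sqrt 3 * real q < 2 * real p" by (rule power_less_imp_less_base) simp
  then have "sqrt 3 / 2 < real p / real q" using q0 by (simp add: field_simps)
  moreover have "q^2 - p^2 = r^2" using assms(2) by simp
  ultimately show ?thesis unfolding S_pairs_def using assms(4,5) q0 lt1 by blast
qed

lemma PP_trip: assumes t: "t \<in> PP" shows "\<exists>p q. (p,q) \<in> S_pairs \<and> trip p q = t"
proof (cases "t = (1,0,1)")
  case True
  have "(1::nat, 1::nat) \<in> S_pairs" unfolding S_pairs_def by simp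
  moreover have "trip 1 1 = (1,0,1)" unfolding trip_def by simp
  ultimately show ?thesis using True by blast
next
  case False
  obtain x y z where tx: "t = (x,y,z)" by (cases t)
  have h: "0<x" "0<y" "0<z" "even y" "gcd x (gcd y z) = 1" "x^2+y^2=z^2" "2 * min x y < z"
    using t False tx unfolding PP_def PPT_def by auto
  have xodd: "odd x"
  proof
    assume "even x"
    then have "even (z^2)" using h(4,6) by (metis even_add even_power zero_less_numeral)
    then have "even z" by simp
    then have "2 dvd gcd x (gcd y z)" using `even x` h(4) by simp
    then show False using h(5) by simp
  qed
  define P where "P = max x y"
  define R where "R = min x y"
  have PR: "P^2 + R^2 = z^2" using h(6) unfolding P_def R_def by (cases "x \<le> y") (auto simp: add.commute)
  have R0: "0 < R" "0 < P" using h unfolding P_def R_def by auto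
  have Rz: "2 * R < z" using h(7) unfolding R_def .
  define p where "p = nat P"
  define r where "r = nat R"
  define q where "q = nat z"
  have ip: "int p = P" "int r = R" "int q = z" using R0 h(3) unfolding p_def r_def q_def by auto
  have e: "p^2 + r^2 = q^2" using PR ip by (metis of_nat_add of_nat_eq_iff of_nat_power)
  have cop: "coprime p q"
  proof -
    let ?g = "gcd P z"
    have "?g^2 dvd P^2" "?g^2 dvd z^2" by simp_all
    then have "?g^2 dvd z^2 - P^2" by (intro dvd_diff)
    then have "?g^2 dvd R^2" using PR by (metis add_diff_cancel_left')
    then have gR: "?g dvd R" by simp
    have gP: "?g dvd P" and gz: "?g dvd z" by simp_all
    have "?g dvd x" "?g dvd y" using gR gP unfolding P_def R_def by (cases "x \<le> y"; auto)+
    then have "?g dvd gcd x (gcd y z)" using gz by simp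
    then have "?g dvd 1" using h(5) by simp
    then have "?g = 1" by simp
    then have "coprime P z" by (simp add: coprime_iff_gcd_eq_1)
    then show ?thesis using ip coprime_int_nat by metis
  qed
  have s: "(p,q) \<in> S_pairs"
    by (rule S_intro[of r]) (use ip R0 e Rz cop in auto)
  have "x \<noteq> y" using xodd h(4) by auto
  have "trip p q = t"
  proof (cases "x < y")
    case True
    then have "P = y" "R = x" unfolding P_def R_def by auto
    then have "even p" using ip h(4) by (metis even_of_nat)
    then show ?thesis using trip_eq[OF e] ip `P = y` `R = x` tx by simp
  next
    case False
    then have "P = x" "R = y" using `x \<noteq> y` unfolding P_def R_def by auto
    then have "odd p" using ip xodd by (metis even_of_nat)
    then show ?thesis using trip_eq[OF e] ip `P = x` `R = y` tx by simp
  qed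
  then show ?thesis using s by blast
qed

lemma psi_bij: "bij_betw psi C2 PP"
proof (rule bij_betw_imageI)
  show "inj_on psi C2"
  proof
    fix a b assume "a \<in> C2" "b \<in> C2" "psi a = psi b"
    then obtain p q p' q' where "(p,q) \<in> S_pairs" "a = Cls p q" "(p',q') \<in> S_pairs" "b = Cls p' q'"
      unfolding C2_def by blast
    then show "a = b" using `psi a = psi b` psi_Cls trip_inj by metis
  qed
  show "psi ` C2 = PP"
  proof
    show "psi ` C2 \<subseteq> PP" unfolding C2_def using psi_Cls trip_PP by auto
    show "PP \<subseteq> psi ` C2"
    proof
      fix t assume "t \<in> PP"
      then obtain p q where "(p,q) \<in> S_pairs" "trip p q = t" using PP_trip by blast
      then have "psi (Cls p q) = t" "Cls p q \<in> C2" using psi_Cls unfolding C2_def by auto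
      then show "t \<in> psi ` C2" by (metis image_eqI)
    qed
  qed
qed


(* ---- F1 ---- *)


lemma wp_simps: "word_prod f e [] = e" "word_prod f e (x # xs) = f x (word_prod f e xs)"
  by (simp_all add: word_prod_def)

locale transfer =
  fixes M :: "'a set" and f e N and g :: "'b \<Rightarrow> 'b \<Rightarrow> 'b" and u h
  assumes bij: "bij_betw h M N" and he: "h e = u" and eM: "e \<in> M"
    and cl: "\<And>a b. a \<in> M \<Longrightarrow> b \<in> M \<Longrightarrow> f a b \<in> M"
    and hom: "\<And>a b. a \<in> M \<Longrightarrow> b \<in> M \<Longrightarrow> h (f a b) = g (h a) (h b)"
begin

lemma inj: "inj_on h M" using bij by (simp add: bij_betw_def)
lemma img: "h ` M = N" using bij by (simp add: bij_betw_def)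
lemma hM: "a \<in> M \<Longrightarrow> h a \<in> N" using img by blast

lemma wp_M: "set xs \<subseteq> M \<Longrightarrow> word_prod f e xs \<in> M"
  by (induction xs) (auto simp: wp_simps eM cl)

lemma h_wp: "set xs \<subseteq> M \<Longrightarrow> h (word_prod f e xs) = word_prod g u (map h xs)"
  by (induction xs) (auto simp: wp_simps he hom wp_M)

definition "hi = the_inv_into M h"
lemma hi_M: "b \<in> N \<Longrightarrow> hi b \<in> M" unfolding hi_def using the_inv_into_into[OF inj] img by auto
lemma h_hi: "b \<in> N \<Longrightarrow> h (hi b) = b" unfolding hi_def using f_the_inv_into_f[OF inj] img by auto
lemma hi_h: "a \<in> M \<Longrightarrow> hi (h a) = a" unfolding hi_def using the_inv_into_f_f[OF inj] by auto

lemma monoid: assumes mN: "is_monoid N g u" shows "is_monoid M f e"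
  unfolding is_monoid_def
proof (intro conjI ballI)
  have uN: "\<And>x. x \<in> N \<Longrightarrow> g u x = x \<and> g x u = x" using mN unfolding is_monoid_def by blast
  have aN: "\<And>x y z. x \<in> N \<Longrightarrow> y \<in> N \<Longrightarrow> z \<in> N \<Longrightarrow> g (g x y) z = g x (g y z)"
    using mN unfolding is_monoid_def by blast
  show "e \<in> M" by (rule eM)
  fix a b assume a: "a \<in> M" and b: "b \<in> M"
  show "f a b \<in> M" using cl a b .
  have "h (f e a) = h a" using hom[OF eM a] he uN[OF hM[OF a]] by simp
  then show "f e a = a" using inj_onD[OF inj _ cl[OF eM a] a] by blast
  have "h (f a e) = h a" using hom[OF a eM] he uN[OF hM[OF a]] by simp
  then show "f a e = a" using inj_onD[OF inj _ cl[OF a eM] a] by blast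
  fix c assume c: "c \<in> M"
  have "h (f (f a b) c) = g (g (h a) (h b)) (h c)" using hom cl a b c by simp
  also have "\<dots> = g (h a) (g (h b) (h c))" using aN hM a b c by simp
  also have "\<dots> = h (f a (f b c))" using hom cl a b c by simp
  finally show "f (f a b) c = f a (f b c)" using inj_onD[OF inj _ cl[OF cl[OF a b] c] cl[OF a cl[OF b c]]] by blast
qed

lemma basis: assumes "free_basis N g u X" shows "free_basis M f e (hi ` X)"
  unfolding free_basis_def
proof (intro conjI ballI)
  have XN: "X \<subseteq> N" using assms unfolding free_basis_def by blast
  show "hi ` X \<subseteq> M" using XN hi_M by blast
  fix a assume a: "a \<in> M"
  obtain ys where ys: "set ys \<subseteq> X" "word_prod g u ys = h a" using assms hM[OF a] unfolding free_basis_def by blast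
  let ?xs = "map hi ys"
  have s: "set ?xs \<subseteq> hi ` X" using ys by auto
  have sM: "set ?xs \<subseteq> M" using ys XN hi_M by auto
  have hh: "\<forall>y\<in>set ys. h (hi y) = y" using ys(1) XN h_hi by auto
  have "map h ?xs = ys" using hh by (induction ys) auto
  then have "h (word_prod f e ?xs) = h a" using h_wp[OF sM] ys by simp
  then have w: "word_prod f e ?xs = a" using inj wp_M[OF sM] a by (meson inj_on_def)
  show "\<exists>!xs. set xs \<subseteq> hi ` X \<and> word_prod f e xs = a"
  proof (rule ex1I[of _ ?xs])
    show "set ?xs \<subseteq> hi ` X \<and> word_prod f e ?xs = a" using s w by simp
  next
    fix xs assume xs: "set xs \<subseteq> hi ` X \<and> word_prod f e xs = a"
    have xsM: "set xs \<subseteq> M" using xs XN hi_M by blast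
    have "set (map h xs) \<subseteq> X"
    proof
      fix y assume "y \<in> set (map h xs)"
      then obtain x where "x \<in> set xs" "y = h x" by auto
      then obtain z where "z \<in> X" "x = hi z" using xs by blast
      then show "y \<in> X" using `y = h x` h_hi XN by auto
    qed
    moreover have "word_prod g u (map h xs) = h a" using h_wp[OF xsM] xs by simp
    ultimately have "map h xs = ys" using assms ys hM[OF a] unfolding free_basis_def by blast
    also have "ys = map h ?xs" using `map h ?xs = ys` by simp
    finally have "map h xs = map h ?xs" .
    moreover have "inj_on h (set xs \<union> set ?xs)" using xsM sM inj by (meson inj_on_subset Un_least)
    ultimately show "xs = ?xs" using inj_on_map_eq_map by blast
  qed
qed

lemma free: "free_monoid N g u \<Longrightarrow> free_monoid M f e"
  unfolding free_monoid_def using monoid basis by blast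

lemma inf_gen: assumes "infinitely_generated N g u" shows "infinitely_generated M f e"
  unfolding infinitely_generated_def
proof
  assume "\<exists>F. finite F \<and> generates M f e F"
  then obtain F where F: "finite F" "generates M f e F" by blast
  have "generates N g u (h ` F)" unfolding generates_def
  proof (intro conjI ballI)
    show "h ` F \<subseteq> N" using F(2) hM unfolding generates_def by blast
    fix b assume b: "b \<in> N"
    obtain xs where xs: "set xs \<subseteq> F" "word_prod f e xs = hi b" using F(2) hi_M[OF b] unfolding generates_def by blast
    have "set xs \<subseteq> M" using xs F(2) unfolding generates_def by blast
    then have "word_prod g u (map h xs) = h (word_prod f e xs)" by (rule h_wp[symmetric])
    then have "word_prod g u (map h xs) = b" using xs(2) h_hi[OF b] by simp
    then show "\<exists>xs. set xs \<subseteq> h ` F \<and> word_prod g u xs = b" using xs(1) by (intro exI[of _ "map h xs"]) auto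
  qed
  then show False using assms F(1) unfolding infinitely_generated_def by blast
qed

lemma noncomm: assumes "\<exists>a\<in>N. \<exists>b\<in>N. g a b \<noteq> g b a" shows "\<exists>a\<in>M. \<exists>b\<in>M. f a b \<noteq> f b a"
proof -
  obtain a b where ab: "a \<in> N" "b \<in> N" "g a b \<noteq> g b a" using assms by blast
  have "h (f (hi a) (hi b)) \<noteq> h (f (hi b) (hi a))" using hom hi_M h_hi ab by simp
  then have "f (hi a) (hi b) \<noteq> f (hi b) (hi a)" by auto
  then show ?thesis using hi_M ab by blast
qed

lemma iso: "monoid_iso M f e N g u h"
  unfolding monoid_iso_def using bij he hom by blast

end


(* ---- F2 ---- *)


lemma ex1_eq: "\<exists>!x. P x \<Longrightarrow> P a \<Longrightarrow> P b \<Longrightarrow> a = b" by blast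

lemma E_iff0: "(a, b) \<in> cayley_edges M f X \<longleftrightarrow> (\<exists>x. a \<in> M \<and> x \<in> X \<and> b = f a x)"
  unfolding cayley_edges_def by auto

locale fmon =
  fixes M :: "'a set" and f e X
  assumes mon: "is_monoid M f e" and fb: "free_basis M f e X" and ig: "infinitely_generated M f e"
begin

lemma eM: "e \<in> M" using mon unfolding is_monoid_def by blast
lemma cl: "a \<in> M \<Longrightarrow> b \<in> M \<Longrightarrow> f a b \<in> M" using mon unfolding is_monoid_def by blast
lemma idl: "a \<in> M \<Longrightarrow> f e a = a" using mon unfolding is_monoid_def by blast
lemma idr: "a \<in> M \<Longrightarrow> f a e = a" using mon unfolding is_monoid_def by blast
lemma assoc: "a \<in> M \<Longrightarrow> b \<in> M \<Longrightarrow> c \<in> M \<Longrightarrow> f (f a b) c = f a (f b c)"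
  using mon unfolding is_monoid_def by blast
lemma XM: "X \<subseteq> M" using fb unfolding free_basis_def by blast

lemma wp_M: "set xs \<subseteq> M \<Longrightarrow> word_prod f e xs \<in> M"
  by (induction xs) (auto simp: wp_simps eM cl)

lemma wp_app: "set xs \<subseteq> M \<Longrightarrow> set ys \<subseteq> M \<Longrightarrow> word_prod f e (xs @ ys) = f (word_prod f e xs) (word_prod f e ys)"
proof (induction xs)
  case Nil then show ?case by (simp add: wp_simps idl wp_M)
next
  case (Cons x xs) then show ?case by (simp add: wp_simps assoc wp_M)
qed

lemma wp_snoc: "set xs \<subseteq> M \<Longrightarrow> x \<in> M \<Longrightarrow> word_prod f e (xs @ [x]) = f (word_prod f e xs) x"
  using wp_app[of xs "[x]"] by (simp add: wp_simps idr)

lemma word: "a \<in> M \<Longrightarrow> \<exists>xs. set xs \<subseteq> X \<and> word_prod f e xs = a"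
  using fb unfolding free_basis_def by blast

lemma uniq: "set xs \<subseteq> X \<Longrightarrow> set ys \<subseteq> X \<Longrightarrow> word_prod f e xs = word_prod f e ys \<Longrightarrow> xs = ys"
proof -
  assume a: "set xs \<subseteq> X" "set ys \<subseteq> X" "word_prod f e xs = word_prod f e ys"
  have "word_prod f e xs \<in> M" using a XM wp_M by blast
  then have "\<exists>!zs. set zs \<subseteq> X \<and> word_prod f e zs = word_prod f e xs" using fb unfolding free_basis_def by blast
  then show ?thesis
  proof (rule ex1_eq)
    show "set xs \<subseteq> X \<and> word_prod f e xs = word_prod f e xs" using a by simp
    show "set ys \<subseteq> X \<and> word_prod f e ys = word_prod f e xs" using a by simp
  qed
qed

abbreviation "E \<equiv> cayley_edges M f X"

lemma E_iff: "(a, b) \<in> E \<longleftrightarrow> (\<exists>x. a \<in> M \<and> x \<in> X \<and> b = f a x)"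
  by (rule E_iff0)

lemma reach: "set xs \<subseteq> X \<Longrightarrow> (e, word_prod f e xs) \<in> E\<^sup>*"
proof (induction xs rule: rev_induct)
  case Nil then show ?case by (simp add: wp_simps)
next
  case (snoc x xs)
  have xsM: "set xs \<subseteq> M" "x \<in> M" using snoc.prems XM by auto
  have "(word_prod f e xs, f (word_prod f e xs) x) \<in> E"
    using E_iff wp_M[OF xsM(1)] snoc.prems by auto
  moreover have "(e, word_prod f e xs) \<in> E\<^sup>*" using snoc by auto
  ultimately show ?case using wp_snoc[OF xsM] by (simp add: rtrancl_into_rtrancl)
qed

lemma tree: "rooted_tree M E e"
  unfolding rooted_tree_def
proof (intro conjI ballI allI impI)
  show "e \<in> M" by (rule eM)
  show "E \<subseteq> M \<times> M" unfolding cayley_edges_def using cl XM by blast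
  fix v assume "v \<in> M"
  then obtain xs where "set xs \<subseteq> X" "word_prod f e xs = v" using word by blast
  then show "(e, v) \<in> E\<^sup>*" using reach by blast
next
  fix v show "(v, e) \<notin> E"
  proof
    assume "(v, e) \<in> E"
    then obtain x where h: "v \<in> M" "x \<in> X" "e = f v x" using E_iff by blast
    obtain vs where vs: "set vs \<subseteq> X" "word_prod f e vs = v" using word h(1) by blast
    have "word_prod f e (vs @ [x]) = e" using wp_snoc[of vs x] vs h XM by auto
    then have "vs @ [x] = []" using uniq[of "vs @ [x]" "[]"] vs h by (simp add: wp_simps)
    then show False by simp
  qed
next
  fix w assume w: "w \<in> M" "w \<noteq> e"
  obtain ws where ws: "set ws \<subseteq> X" "word_prod f e ws = w" using word w(1) by blast
  have "ws \<noteq> []" using ws w(2) by (auto simp: wp_simps)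
  then obtain vs x where vx: "ws = vs @ [x]" by (metis append_butlast_last_id)
  have vM: "set vs \<subseteq> M" "x \<in> M" using ws vx XM by auto
  show "\<exists>!v. (v, w) \<in> E"
  proof (rule ex1I[of _ "word_prod f e vs"])
    show "(word_prod f e vs, w) \<in> E" using E_iff wp_M[OF vM(1)] ws vx wp_snoc[OF vM] by auto
  next
    fix v assume "(v, w) \<in> E"
    then obtain y where h: "v \<in> M" "y \<in> X" "w = f v y" using E_iff by blast
    obtain us where us: "set us \<subseteq> X" "word_prod f e us = v" using word h(1) by blast
    have "word_prod f e (us @ [y]) = w" using wp_snoc[of us y] us h XM by auto
    then have "us @ [y] = vs @ [x]" using uniq[of "us @ [y]" "vs @ [x]"] us h ws vx by auto
    then show "v = word_prod f e vs" using us by simp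
  qed
qed

lemma X_inf: "infinite X"
proof
  assume "finite X"
  moreover have "generates M f e X" using fb unfolding free_basis_def generates_def by blast
  ultimately show False using ig unfolding infinitely_generated_def by blast
qed

lemma M_inf: "infinite M" using X_inf XM finite_subset by blast

lemma out_eq: "v \<in> M \<Longrightarrow> out_nbrs E v = f v ` X"
  unfolding out_nbrs_def using E_iff by auto

lemma out_inj: assumes v: "v \<in> M" shows "inj_on (f v) X"
proof
  fix x y assume xy: "x \<in> X" "y \<in> X" "f v x = f v y"
  obtain vs where vs: "set vs \<subseteq> X" "word_prod f e vs = v" using word v by blast
  have sM: "set vs \<subseteq> M" "x \<in> M" "y \<in> M" using vs xy XM by auto
  have "word_prod f e (vs @ [x]) = f v x" using wp_snoc[OF sM(1,2)] vs(2) by simp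
  moreover have "word_prod f e (vs @ [y]) = f v y" using wp_snoc[OF sM(1,3)] vs(2) by simp
  ultimately have "word_prod f e (vs @ [x]) = word_prod f e (vs @ [y])" using xy(3) by simp
  moreover have "set (vs @ [x]) \<subseteq> X" "set (vs @ [y]) \<subseteq> X" using vs xy by auto
  ultimately have "vs @ [x] = vs @ [y]" using uniq by blast
  then show "x = y" by simp
qed

lemma out_eqpoll: "v \<in> M \<Longrightarrow> X \<approx> out_nbrs E v"
  unfolding eqpoll_def using out_eq out_inj by (metis inj_on_imp_bij_betw)

lemma regular: "regular_digraph M E"
  unfolding regular_digraph_def using out_eqpoll eqpoll_sym eqpoll_trans by blast

lemma out_inf: "v \<in> M \<Longrightarrow> infinite (out_nbrs E v)"
  using out_eqpoll X_inf eqpoll_finite_iff by blast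

end


(* ---- F3 ---- *)


lemma Cls11: "Cls 1 1 = {L \<in> WR_Z2. lattice_theta L = pi / 2}"
proof -
  have "sin (lattice_theta L) = 1 \<longleftrightarrow> lattice_theta L = pi / 2" if L: "L \<in> WR_Z2" for L
  proof -
    interpret wrz L by unfold_locales (rule L)
    obtain x where x: "0 \<le> x" "2 * x < 1" "lattice_theta L = arccos x" using theta_range by blast
    have b: "-1 \<le> x" "x \<le> 1" using x by auto
    have "sin (lattice_theta L) = sqrt (1 - x^2)" using x(3) sin_arccos[OF b] by simp
    moreover have "sqrt (1 - x^2) = 1 \<longleftrightarrow> x = 0" by simp
    moreover have "arccos x = pi / 2 \<longleftrightarrow> x = 0"
    proof
      assume "arccos x = pi / 2"
      then have "cos (arccos x) = cos (pi / 2)" by (simp only:)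
      then show "x = 0" using cos_arccos[OF b] by simp
    qed simp
    ultimately show ?thesis using x(3) by simp
  qed
  then show ?thesis unfolding Cls_def by auto
qed

definition Phi :: "(real \<times> real) set set \<Rightarrow> int ^ 3 ^ 3" where "Phi = phi \<circ> psi"

lemma Phi_bij: "bij_betw Phi C2 H'"
  unfolding Phi_def using bij_betw_trans[OF psi_bij phi_bij] .

lemma psi_inj: "inj_on psi C2" using psi_bij by (simp add: bij_betw_def)
lemma psi_img: "psi ` C2 = PP" using psi_bij by (simp add: bij_betw_def)

lemma Phi_H': "a \<in> C2 \<Longrightarrow> Phi a \<in> H'" using Phi_bij bij_betwE by blast

lemma cstar_props: assumes a: "a \<in> C2" and b: "b \<in> C2"
  shows "cstar a b \<in> C2 \<and> Phi (cstar a b) = Phi a ** Phi b"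
proof -
  let ?M = "Phi a ** Phi b"
  have M: "?M \<in> H'" using H'_mul Phi_H' a b by blast
  let ?t = "unvec3 (?M *v vec3 (1,0,1))"
  have t: "?t \<in> PP" using H'_val_PP[OF M] .
  have c: "cstar a b = the_inv_into C2 psi ?t" unfolding cstar_def Phi_def by simp
  have cC: "cstar a b \<in> C2" unfolding c using the_inv_into_into[OF psi_inj] t psi_img by blast
  have "psi (cstar a b) = ?t" unfolding c using f_the_inv_into_f[OF psi_inj] t psi_img by blast
  then have "Phi (cstar a b) = phi ?t" by (simp add: Phi_def)
  also have "\<dots> = ?M" using phi_val[OF M] .
  finally show ?thesis using cC by simp
qed

lemma one_C2: "Cls 1 1 \<in> C2" unfolding C2_def S_pairs_def by blast

lemma Phi_one: "Phi (Cls 1 1) = mat 1"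
proof -
  have "psi (Cls 1 1) = (1,0,1)" using psi_Cls[of 1 1] unfolding S_pairs_def trip_def by simp
  moreover have "phi (unvec3 (mat 1 *v vec3 (1,0,1))) = mat 1" using phi_val[OF mat1_H'] .
  ultimately show ?thesis by (simp add: Phi_def unvec3_vec3)
qed

interpretation TH: transfer C2 cstar "Cls 1 1" H' "(**)" "mat 1" Phi
  by unfold_locales (use Phi_bij Phi_one one_C2 cstar_props in auto)

definition wi :: "int ^ 3 ^ 3 \<Rightarrow> L list" where "wi = the_inv_into MW wmat"

lemma wmat_bij: "bij_betw wmat MW H'" using wmat_inj_MW H'_MW by (simp add: bij_betw_def)

definition kappa where "kappa = wi \<circ> Phi"

lemma wi_bij: "bij_betw wi H' MW" unfolding wi_def using bij_betw_the_inv_into[OF wmat_bij] .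

lemma kappa_bij: "bij_betw kappa C2 MW" unfolding kappa_def using bij_betw_trans[OF Phi_bij wi_bij] .

lemma wmat_wi: "M \<in> H' \<Longrightarrow> wmat (wi M) = M" unfolding wi_def using f_the_inv_into_f[OF wmat_inj_MW] H'_MW by auto
lemma wi_MW: "M \<in> H' \<Longrightarrow> wi M \<in> MW" using wi_bij bij_betwE by blast
lemma wi_wmat: "u \<in> MW \<Longrightarrow> wi (wmat u) = u" unfolding wi_def using the_inv_into_f_f[OF wmat_inj_MW] by auto

lemma kappa_hom: assumes a: "a \<in> C2" and b: "b \<in> C2" shows "kappa (cstar a b) = kappa a @ kappa b"
proof -
  have "Phi (cstar a b) = Phi a ** Phi b" using cstar_props a b by blast
  also have "\<dots> = wmat (kappa a) ** wmat (kappa b)" unfolding kappa_def using wmat_wi Phi_H' a b by simp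
  also have "\<dots> = wmat (kappa a @ kappa b)" by (simp add: wmat_append)
  finally have "kappa (cstar a b) = wi (wmat (kappa a @ kappa b))" unfolding kappa_def by simp
  moreover have "kappa a @ kappa b \<in> MW" using MW_app wi_MW Phi_H' a b unfolding kappa_def by simp
  ultimately show ?thesis using wi_wmat by simp
qed

lemma kappa_one: "kappa (Cls 1 1) = []"
  unfolding kappa_def using Phi_one wi_wmat[OF Nil_MW] by simp

interpretation TW: transfer C2 cstar "Cls 1 1" MW "(@)" "[]" kappa
  by unfold_locales (use kappa_bij kappa_one one_C2 cstar_props kappa_hom in auto)

lemma C2_monoid: "is_monoid C2 cstar (Cls 1 1)" using TW.monoid MW_monoid .
lemma C2_free: "free_monoid C2 cstar (Cls 1 1)"
  using TW.free MW_monoid MW_free_basis unfolding free_monoid_def by blast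
lemma C2_noncomm: "\<exists>a\<in>C2. \<exists>b\<in>C2. cstar a b \<noteq> cstar b a" using TW.noncomm MW_noncomm .
lemma C2_ig: "infinitely_generated C2 cstar (Cls 1 1)" using TW.inf_gen MW_inf_gen .

theorem theorem1p1:
  shows "bij_betw psi C2 PP
    \<and> (\<forall>t\<in>PP. \<exists>!M. M \<in> H' \<and> M *v vec3 (1, 0, 1) = vec3 t)
    \<and> bij_betw phi PP H'
    \<and> is_monoid C2 cstar (Cls 1 1)
    \<and> free_monoid C2 cstar (Cls 1 1)
    \<and> (\<exists>a\<in>C2. \<exists>b\<in>C2. cstar a b \<noteq> cstar b a)
    \<and> infinitely_generated C2 cstar (Cls 1 1)
    \<and> Cls 1 1 = {L \<in> WR_Z2. lattice_theta L = pi / 2}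
    \<and> monoid_iso C2 cstar (Cls 1 1) H' (**) (mat 1) (phi \<circ> psi)
    \<and> (\<forall>X. free_basis C2 cstar (Cls 1 1) X \<longrightarrow>
          rooted_tree C2 (cayley_edges C2 cstar X) (Cls 1 1)
          \<and> infinite C2
          \<and> regular_digraph C2 (cayley_edges C2 cstar X)
          \<and> (\<forall>v\<in>C2. infinite (out_nbrs (cayley_edges C2 cstar X) v)))"
proof (intro conjI allI impI ballI)
  show "bij_betw psi C2 PP" by (rule psi_bij)
  show "bij_betw phi PP H'" by (rule phi_bij)
  fix t assume "t \<in> PP" then show "\<exists>!M. M \<in> H' \<and> M *v vec3 (1, 0, 1) = vec3 t" by (rule H'_ex1)
next
  show "is_monoid C2 cstar (Cls 1 1)" by (rule C2_monoid)
  show "free_monoid C2 cstar (Cls 1 1)" by (rule C2_free)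
  show "\<exists>a\<in>C2. \<exists>b\<in>C2. cstar a b \<noteq> cstar b a" by (rule C2_noncomm)
  show "infinitely_generated C2 cstar (Cls 1 1)" by (rule C2_ig)
  show "Cls 1 1 = {L \<in> WR_Z2. lattice_theta L = pi / 2}" by (rule Cls11)
  show "monoid_iso C2 cstar (Cls 1 1) H' (**) (mat 1) (phi \<circ> psi)" using TH.iso unfolding Phi_def .
next
  fix X assume X: "free_basis C2 cstar (Cls 1 1) X"
  interpret F: fmon C2 cstar "Cls 1 1" X by unfold_locales (rule C2_monoid, rule X, rule C2_ig)
  show "rooted_tree C2 (cayley_edges C2 cstar X) (Cls 1 1)" by (rule F.tree)
  show "infinite C2" by (rule F.M_inf)
  show "regular_digraph C2 (cayley_edges C2 cstar X)" by (rule F.regular)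
  fix v assume "v \<in> C2" then show "infinite (out_nbrs (cayley_edges C2 cstar X) v)" by (rule F.out_inf)
qed


end
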